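(* Let $R$ be a commutative ring, $I$ an ideal of $R$ and $n\ge 3$. Then $\mathrm{EO}_{2n}(R,I)\subseteq \mathrm{EO}^1_{2n}(R,I)$.
   Context: Let $\sigma$ be the permutation of $\{1,\dots,2n\}$ with $\sigma(2i)=2i-1$, $\sigma(2i-1)=2i$. Let $\widetilde\psi_n=\sum_{i=1}^n(e_{2i-1,2i}+e_{2i,2i-1})$ and $\mathrm{O}_{2n}(R)=\{\alpha\in\mathrm{GL}_{2n}(R):\alpha^t\widetilde\psi_n\alpha=\widetilde\psi_n\}$. For $z\in R$ and $1\le i\ne j\le 2n$ with $i\ne\sigma(j)$, $oe_{ij}(z)=1_{2n}+z e_{ij}-z e_{\sigma(j)\sigma(i)}$. $\mathrm{EO}_{2n}(R)$ is generated by all $oe_{ij}(z)$; $\mathrm{EO}_{2n}(I)$ is generated by the $oe_{ij}(x)$, $x\in I$; $\mathrm{EO}_{2n}(R,I)$ is the normal closure of $\mathrm{EO}_{2n}(I)$ in $\mathrm{EO}_{2n}(R)$. $\mathrm{EO}^1_{2n}(R,I)$ is the subgroup of $\mathrm{EO}_{2n}(R)$ generated by the elements $oe_{1i}(a)$ and $oe_{j1}(x)$ with $a\in R$, $x\in I$, $3\le i,j\le 2n$. *)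

theory Defs
  imports "Jordan_Normal_Form.Matrix"
begin

text \<open>Indices are 1-based as in the paper: matrix entry (i,j) with 1 \<le> i,j \<le> 2n
  is stored at JNF position (i-1, j-1).\<close>

definition sig :: "nat \<Rightarrow> nat" where
  "sig k = (if even k then k - 1 else k + 1)"

definition is_ideal :: "'a::comm_ring_1 set \<Rightarrow> bool" where
  "is_ideal I \<longleftrightarrow> 0 \<in> I \<and> (\<forall>x\<in>I. \<forall>y\<in>I. x + y \<in> I) \<and> (\<forall>r x. x \<in> I \<longrightarrow> r * x \<in> I)"

definition oe :: "nat \<Rightarrow> nat \<Rightarrow> nat \<Rightarrow> 'a::comm_ring_1 \<Rightarrow> 'a mat" where
  "oe n i j z = mat (2*n) (2*n) (\<lambda>(a,b).
      (if a = b then 1 else 0)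
    + (if a + 1 = i \<and> b + 1 = j then z else 0)
    - (if a + 1 = sig j \<and> b + 1 = sig i then z else 0))"

definition oe_index :: "nat \<Rightarrow> nat \<Rightarrow> nat \<Rightarrow> bool" where
  "oe_index n i j \<longleftrightarrow> 1 \<le> i \<and> i \<le> 2*n \<and> 1 \<le> j \<and> j \<le> 2*n \<and> i \<noteq> j \<and> i \<noteq> sig j"

inductive_set gen_subgroup :: "nat \<Rightarrow> 'a::comm_ring_1 mat set \<Rightarrow> 'a mat set"
  for n :: nat and S :: "'a mat set" where
  one: "1\<^sub>m (2*n) \<in> gen_subgroup n S"
| gen: "a \<in> gen_subgroup n S \<Longrightarrow> s \<in> S \<Longrightarrow> a * s \<in> gen_subgroup n S"
| inv: "a \<in> gen_subgroup n S \<Longrightarrow> s \<in> S \<Longrightarrow> t \<in> carrier_mat (2*n) (2*n)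
        \<Longrightarrow> s * t = 1\<^sub>m (2*n) \<Longrightarrow> t * s = 1\<^sub>m (2*n) \<Longrightarrow> a * t \<in> gen_subgroup n S"

definition EO :: "nat \<Rightarrow> 'a::comm_ring_1 mat set" where
  "EO n = gen_subgroup n {oe n i j z | i j z. oe_index n i j}"

definition EO_I :: "nat \<Rightarrow> 'a::comm_ring_1 set \<Rightarrow> 'a mat set" where
  "EO_I n I = gen_subgroup n {oe n i j x | i j x. oe_index n i j \<and> x \<in> I}"

definition EO_rel :: "nat \<Rightarrow> 'a::comm_ring_1 set \<Rightarrow> 'a mat set" where
  "EO_rel n I = gen_subgroup n
     {g * h * g' | g h g'. g \<in> EO n \<and> h \<in> EO_I n I \<and> g' \<in> carrier_mat (2*n) (2*n)
        \<and> g * g' = 1\<^sub>m (2*n) \<and> g' * g = 1\<^sub>m (2*n)}"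

definition EO1_rel :: "nat \<Rightarrow> 'a::comm_ring_1 set \<Rightarrow> 'a mat set" where
  "EO1_rel n I = gen_subgroup n
     ({oe n 1 i a | i a. 3 \<le> i \<and> i \<le> 2*n} \<union> {oe n j 1 x | j x. 3 \<le> j \<and> j \<le> 2*n \<and> x \<in> I})"

end

theory Submission
  imports Defs
begin

lemma sig_sig[simp]: "sig (sig k) = k" unfolding sig_def by auto
lemma sig_inj[simp]: "(sig a = sig b) = (a = b)" by (metis sig_sig)
lemma sig_odd: "sig (2*i+1) = 2*i+2" unfolding sig_def by auto
lemma sig_odd'[simp]: "sig (Suc (2*i)) = Suc (Suc (2*i))" unfolding sig_def by auto
lemma sig_even'[simp]: "sig (Suc (Suc (2*i))) = Suc (2*i)" unfolding sig_def by auto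
lemma sig_even: "sig (2*i+2) = 2*i+1" unfolding sig_def by auto
lemma sig_neq[simp]: "sig k \<noteq> k \<or> k = 0" unfolding sig_def by presburger
lemma sig_range: "1 \<le> k \<Longrightarrow> k \<le> 2*n \<Longrightarrow> 1 \<le> sig k \<and> sig k \<le> 2*n"
  unfolding sig_def by auto presburger
lemma sig_0[simp]: "sig 0 = 0" unfolding sig_def by auto
lemma sig_ge1: "1 \<le> k \<Longrightarrow> 1 \<le> sig k" unfolding sig_def by auto

definition sv :: "nat \<Rightarrow> (nat \<Rightarrow> 'a::comm_ring_1) \<Rightarrow> bool" where
  "sv n w \<longleftrightarrow> (\<forall>i. (i = 0 \<or> 2*n < i) \<longrightarrow> w i = 0)"
definition Bf :: "nat \<Rightarrow> (nat \<Rightarrow> 'a::comm_ring_1) \<Rightarrow> (nat \<Rightarrow> 'a) \<Rightarrow> 'a" where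
  "Bf n x y = (\<Sum>j<2*n. x (sig (j+1)) * y (j+1))"
definition Qf :: "nat \<Rightarrow> (nat \<Rightarrow> 'a::comm_ring_1) \<Rightarrow> 'a" where
  "Qf n x = (\<Sum>i<n. x (2*i+1) * x (2*i+2))"
definition ev :: "nat \<Rightarrow> nat \<Rightarrow> 'a::comm_ring_1" where
  "ev i = (\<lambda>k. if k = i then 1 else 0)"

lemma sum_pairs: "(\<Sum>j<2*(n::nat). f j) = (\<Sum>i<n. f (2*i) + f (2*i+1))"
  by (induction n) (auto simp: add.assoc)

lemma Bf_pairs: "Bf n x y = (\<Sum>i<n. x (2*i+2) * y (2*i+1) + x (2*i+1) * y (2*i+2))"
  unfolding Bf_def sum_pairs by (simp add: add.commute)

lemma Bf_sym: "Bf n x y = Bf n y x"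
  unfolding Bf_pairs by (simp add: algebra_simps)
lemma Bf_self: "Bf n x x = 2 * Qf n x"
  unfolding Bf_pairs Qf_def by (simp add: algebra_simps sum_distrib_left)

lemma Bf_add1[simp]: "Bf n (\<lambda>k. x k + y k) z = Bf n x z + Bf n y z"
  unfolding Bf_def by (simp add: algebra_simps sum.distrib)
lemma Bf_add2[simp]: "Bf n z (\<lambda>k. x k + y k) = Bf n z x + Bf n z y"
  unfolding Bf_def by (simp add: algebra_simps sum.distrib)
lemma Bf_diff1[simp]: "Bf n (\<lambda>k. x k - y k) z = Bf n x z - Bf n y z"
  unfolding Bf_def by (simp add: algebra_simps sum_subtractf)
lemma Bf_diff2[simp]: "Bf n z (\<lambda>k. x k - y k) = Bf n z x - Bf n z y"
  unfolding Bf_def by (simp add: algebra_simps sum_subtractf)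
lemma Bf_neg1[simp]: "Bf n (\<lambda>k. - x k) z = - Bf n x z"
  unfolding Bf_def by (simp add: sum_negf)
lemma Bf_neg2[simp]: "Bf n z (\<lambda>k. - x k) = - Bf n z x"
  unfolding Bf_def by (simp add: sum_negf)
lemma Bf_sc1[simp]: "Bf n (\<lambda>k. c * x k) z = c * Bf n x z"
  unfolding Bf_def by (simp add: algebra_simps sum_distrib_left)
lemma Bf_sc2[simp]: "Bf n z (\<lambda>k. c * x k) = c * Bf n z x"
  unfolding Bf_def by (simp add: algebra_simps sum_distrib_left)
lemma Bf_zero1[simp]: "Bf n (\<lambda>k. 0) z = 0" unfolding Bf_def by simp
lemma Bf_zero2[simp]: "Bf n z (\<lambda>k. 0) = 0" unfolding Bf_def by simp

lemma Qf_add[simp]: "Qf n (\<lambda>k. x k + y k) = Qf n x + Qf n y + Bf n x y"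
  unfolding Bf_pairs Qf_def by (simp add: algebra_simps sum.distrib)
lemma Qf_diff[simp]: "Qf n (\<lambda>k. x k - y k) = Qf n x + Qf n y - Bf n x y"
  unfolding Bf_pairs Qf_def by (simp add: algebra_simps sum.distrib sum_subtractf)
lemma Qf_neg[simp]: "Qf n (\<lambda>k. - x k) = Qf n x"
  unfolding Qf_def by simp
lemma Qf_sc[simp]: "Qf n (\<lambda>k. c * x k) = c * c * Qf n x"
  unfolding Qf_def by (simp add: algebra_simps sum_distrib_left)
lemma Qf_zero[simp]: "Qf n (\<lambda>k. 0) = 0" unfolding Qf_def by simp

lemma Qf_ev[simp]: "Qf n (ev i) = 0"
  unfolding Qf_def ev_def by (rule sum.neutral) auto
lemma Bf_ev1[simp]: "1 \<le> i \<Longrightarrow> i \<le> 2*n \<Longrightarrow> Bf n (ev i) y = y (sig i)"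
proof -
  assume a: "1 \<le> i" "i \<le> 2*n"
  have s: "1 \<le> sig i" "sig i \<le> 2*n" using sig_range[OF a] by auto
  have e: "\<And>j. ev i (sig (j+1)) * y (j+1) = (if j = sig i - 1 then y (sig i) else 0)"
  proof -
    fix j
    have "sig (j+1) = i \<longleftrightarrow> j + 1 = sig i" by (metis sig_sig)
    also have "\<dots> \<longleftrightarrow> j = sig i - 1" using s by auto
    finally show "ev i (sig (j+1)) * y (j+1) = (if j = sig i - 1 then y (sig i) else 0)"
      unfolding ev_def using s by auto
  qed
  have "Bf n (ev i) y = (\<Sum>j<2*n. if j = sig i - 1 then y (sig i) else 0)"
    unfolding Bf_def e ..
  also have "\<dots> = y (sig i)" using s by simp
  finally show ?thesis .
qed
lemma Bf_ev2[simp]: "1 \<le> i \<Longrightarrow> i \<le> 2*n \<Longrightarrow> Bf n y (ev i) = y (sig i)"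
  by (subst Bf_sym) simp

definition act :: "nat \<Rightarrow> 'a::comm_ring_1 mat \<Rightarrow> (nat \<Rightarrow> 'a) \<Rightarrow> (nat \<Rightarrow> 'a)" where
  "act n M w = (\<lambda>i. if 1 \<le> i \<and> i \<le> 2*n then (\<Sum>j<2*n. M $$ (i-1, j) * w (j+1)) else 0)"
definition Tm :: "nat \<Rightarrow> (nat \<Rightarrow> 'a::comm_ring_1) \<Rightarrow> (nat \<Rightarrow> 'a) \<Rightarrow> 'a mat" where
  "Tm n u v = mat (2*n) (2*n) (\<lambda>(a,b). (if a = b then 1 else 0) + u (a+1) * v (sig (b+1))
       - v (a+1) * u (sig (b+1)) - Qf n v * u (a+1) * u (sig (b+1)))"
definition Tv :: "nat \<Rightarrow> (nat \<Rightarrow> 'a::comm_ring_1) \<Rightarrow> (nat \<Rightarrow> 'a) \<Rightarrow> (nat \<Rightarrow> 'a) \<Rightarrow> (nat \<Rightarrow> 'a)" where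
  "Tv n u v w = (\<lambda>k. w k + (Bf n v w - Qf n v * Bf n u w) * u k - Bf n u w * v k)"

lemma Tm_carrier[simp]: "Tm n u v \<in> carrier_mat (2*n) (2*n)"
  unfolding Tm_def by simp

lemma sv_act[simp]: "sv n (act n M w)" unfolding sv_def act_def by auto

lemma mult_entry: assumes "M \<in> carrier_mat (2*n) (2*n)" "N \<in> carrier_mat (2*n) (2*n)" "a < 2*n" "b < 2*n"
  shows "(M * N) $$ (a,b) = (\<Sum>k<2*n. M $$ (a,k) * N $$ (k,b))"
  using assms by (simp add: index_mult_mat scalar_prod_def atLeast0LessThan)

lemma act_mult: assumes "M \<in> carrier_mat (2*n) (2*n)" "N \<in> carrier_mat (2*n) (2*n)"
  shows "act n (M * N) w = act n M (act n N w)"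
proof (rule ext)
  fix i
  show "act n (M * N) w i = act n M (act n N w) i"
  proof (cases "1 \<le> i \<and> i \<le> 2*n")
    case True
    have "act n (M * N) w i = (\<Sum>j<2*n. (\<Sum>k<2*n. M $$ (i-1,k) * N $$ (k,j)) * w (j+1))"
      unfolding act_def using True assms by (auto simp: mult_entry simp del: index_mult_mat intro!: sum.cong)
    also have "\<dots> = (\<Sum>j<2*n. \<Sum>k<2*n. M $$ (i-1,k) * (N $$ (k,j) * w (j+1)))"
      by (simp add: sum_distrib_right mult.assoc)
    also have "\<dots> = (\<Sum>k<2*n. \<Sum>j<2*n. M $$ (i-1,k) * (N $$ (k,j) * w (j+1)))"
      by (rule sum.swap)
    also have "\<dots> = (\<Sum>k<2*n. M $$ (i-1,k) * (\<Sum>j<2*n. N $$ (k,j) * w (j+1)))"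
      by (simp add: sum_distrib_left)
    also have "\<dots> = act n M (act n N w) i"
      unfolding act_def using True by simp
    finally show ?thesis .
  qed (auto simp: act_def)
qed

lemma delta_sum: "(a::nat) < m \<Longrightarrow> (\<Sum>j<m. (if a = j then c else 0) * f j) = (c::'a::comm_ring_1) * f a"
proof -
  assume "a < m"
  have "(\<Sum>j<m. (if a = j then c else 0) * f j) = (\<Sum>j<m. if j = a then c * f a else 0)"
    by (rule sum.cong) auto
  also have "\<dots> = c * f a" using \<open>a < m\<close> by simp
  finally show ?thesis .
qed

lemma act_one: "sv n w \<Longrightarrow> act n (1\<^sub>m (2*n)) w = w"
proof (rule ext)
  fix i assume sw: "sv n w"
  show "act n (1\<^sub>m (2*n)) w i = w i"
  proof (cases "1 \<le> i \<and> i \<le> 2*n")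
    case True
    have "act n (1\<^sub>m (2*n)) w i = (\<Sum>j<2*n. (if i - 1 = j then 1 else 0) * w (j+1))"
      unfolding act_def using True by (auto intro!: sum.cong)
    also have "\<dots> = w i" using True by (subst delta_sum) auto
    finally show ?thesis .
  next
    case False
    then have "i = 0 \<or> 2*n < i" by auto
    then show ?thesis using sw False unfolding act_def sv_def by auto
  qed
qed

lemma Bf_shift: "(\<Sum>j<2*n. x (sig (j+1)) * y (j+1)) = Bf n x y" unfolding Bf_def ..

lemma act_Tm: assumes "sv n u" "sv n v" "sv n w"
  shows "act n (Tm n u v) w = Tv n u v w"
proof (rule ext)
  fix i
  show "act n (Tm n u v) w i = Tv n u v w i"
  proof (cases "1 \<le> i \<and> i \<le> 2*n")
    case True
    have "act n (Tm n u v) w i = (\<Sum>j<2*n. (if i - 1 = j then 1 else 0) * w (j+1)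
       + u i * (v (sig (j+1)) * w (j+1)) - v i * (u (sig (j+1)) * w (j+1))
       - Qf n v * u i * (u (sig (j+1)) * w (j+1)))"
      unfolding act_def Tm_def using True by (auto intro!: sum.cong simp: algebra_simps)
    also have "\<dots> = (\<Sum>j<2*n. (if i - 1 = j then 1 else 0) * w (j+1))
       + u i * Bf n v w - v i * Bf n u w - Qf n v * u i * Bf n u w"
      by (simp add: sum.distrib sum_subtractf sum_distrib_left[symmetric] Bf_def)
    also have "\<dots> = w i + u i * Bf n v w - v i * Bf n u w - Qf n v * u i * Bf n u w"
      using True by (subst delta_sum) auto
    finally show ?thesis unfolding Tv_def by (simp add: algebra_simps)
  next
    case False
    then have "i = 0 \<or> 2*n < i" by auto
    then show ?thesis using assms False unfolding act_def sv_def Tv_def by auto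
  qed
qed

lemma mat_eq_act: assumes "M \<in> carrier_mat (2*n) (2*n)" "N \<in> carrier_mat (2*n) (2*n)"
  and "\<And>w. sv n w \<Longrightarrow> act n M w = act n N w" shows "M = N"
proof (rule eq_matI)
  fix a b assume ab: "a < dim_row N" "b < dim_col N"
  have ab': "a < 2*n" "b < 2*n" using ab assms by auto
  have sv: "sv n (ev (b+1))" unfolding sv_def ev_def using ab' by auto
  have e: "act n P (ev (b+1)) (a+1) = P $$ (a,b)" for P
  proof -
    have "act n P (ev (b+1)) (a+1) = (\<Sum>j<2*n. (if b = j then 1 else 0) * P $$ (a, j))"
      unfolding act_def ev_def using ab' by (auto intro!: sum.cong)
    also have "\<dots> = P $$ (a,b)" using ab' by (subst delta_sum) auto
    finally show ?thesis .
  qed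
  show "M $$ (a,b) = N $$ (a,b)" using e[of M] e[of N] assms(3)[OF sv] by simp
qed (use assms in auto)

lemma sv_add[simp]: "sv n x \<Longrightarrow> sv n y \<Longrightarrow> sv n (\<lambda>k. x k + y k)" unfolding sv_def by auto
lemma sv_diff[simp]: "sv n x \<Longrightarrow> sv n y \<Longrightarrow> sv n (\<lambda>k. x k - y k)" unfolding sv_def by auto
lemma sv_neg[simp]: "sv n x \<Longrightarrow> sv n (\<lambda>k. - x k)" unfolding sv_def by auto
lemma sv_sc[simp]: "sv n x \<Longrightarrow> sv n (\<lambda>k. c * x k)" unfolding sv_def by auto
lemma sv_zero[simp]: "sv n (\<lambda>k. 0)" unfolding sv_def by auto
lemma sv_ev[simp]: "1 \<le> i \<Longrightarrow> i \<le> 2*n \<Longrightarrow> sv n (ev i)" unfolding sv_def ev_def by auto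
lemma sv_Tv[simp]: "sv n u \<Longrightarrow> sv n v \<Longrightarrow> sv n w \<Longrightarrow> sv n (Tv n u v w)"
  unfolding sv_def Tv_def by auto

lemma Bf_sc1'[simp]: "Bf n (\<lambda>k. x k * c) z = c * Bf n x z"
  unfolding Bf_def by (simp add: algebra_simps sum_distrib_left)
lemma Bf_sc2'[simp]: "Bf n z (\<lambda>k. x k * c) = c * Bf n z x"
  unfolding Bf_def by (simp add: algebra_simps sum_distrib_left)
lemma Qf_sc'[simp]: "Qf n (\<lambda>k. x k * c) = c * c * Qf n x"
  unfolding Qf_def by (simp add: algebra_simps sum_distrib_left)

lemma act_Tm_mult: "sv n u \<Longrightarrow> sv n v \<Longrightarrow> sv n w \<Longrightarrow>
  act n (Tm n u v * M) w = Tv n u v (act n M w)" if "M \<in> carrier_mat (2*n) (2*n)"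
  using that by (simp add: act_mult act_Tm)

lemma Tm_add2: assumes s: "sv n a" "sv n b1" "sv n b2" and q: "Qf n a = 0"
  and o: "Bf n a b1 = 0" "Bf n a b2 = 0"
  shows "Tm n a b1 * Tm n a b2 = Tm n a (\<lambda>k. b1 k + b2 k)"
proof (rule mat_eq_act[of _ n])
  fix w :: "nat \<Rightarrow> 'a" assume w: "sv n w"
  have o': "Bf n b1 a = 0" "Bf n b2 a = 0" using o Bf_sym by metis+
  have aa: "Bf n a a = 0" by (simp add: q Bf_self)
  show "act n (Tm n a b1 * Tm n a b2) w = act n (Tm n a (\<lambda>k. b1 k + b2 k)) w"
    using s w q o o' aa
    apply (simp add: act_mult act_Tm)
    apply (simp add: Tv_def fun_eq_iff)
    by (simp add: algebra_simps Bf_sym[of n b2 b1])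
qed (auto intro!: mult_carrier_mat[OF Tm_carrier Tm_carrier])

lemma Tm_zero[simp]: "Tm n u (\<lambda>k. 0) = 1\<^sub>m (2*n)"
  by (rule eq_matI) (auto simp: Tm_def)

lemma Tm_scale: "Tm n (\<lambda>k. c * u k) v = Tm n u (\<lambda>k. c * v k)"
  by (rule eq_matI) (auto simp: Tm_def algebra_simps)

lemma Tm_sym: "Qf n u = 0 \<Longrightarrow> Qf n v = 0 \<Longrightarrow> Tm n u v = Tm n (\<lambda>k. - v k) u"
  by (rule eq_matI) (auto simp: Tm_def algebra_simps)

lemma Tm_negneg: "Tm n (\<lambda>k. - u k) (\<lambda>k. - v k) = Tm n u v"
  by (rule eq_matI) (auto simp: Tm_def algebra_simps)

lemma Tm_self: "Qf n a = 0 \<Longrightarrow> Tm n a (\<lambda>k. c * a k) = 1\<^sub>m (2*n)"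
  by (rule eq_matI) (auto simp: Tm_def algebra_simps)

lemma Tm_inv: assumes "sv n a" "sv n b" "Qf n a = 0" "Bf n a b = 0"
  shows "Tm n a b * Tm n a (\<lambda>k. - b k) = 1\<^sub>m (2*n)" "Tm n a (\<lambda>k. - b k) * Tm n a b = 1\<^sub>m (2*n)"
  using Tm_add2[of n a b "\<lambda>k. - b k"] Tm_add2[of n a "\<lambda>k. - b k" b] assms by auto

lemma Tv_B: assumes "Qf n a = 0" "Bf n a b = 0"
  shows "Bf n (Tv n a b x) (Tv n a b y) = Bf n x y"
proof -
  have aa: "Bf n a a = 0" by (simp add: assms Bf_self)
  have ba: "Bf n b a = 0" using assms Bf_sym by metis
  show ?thesis using assms aa ba
    apply (simp add: Tv_def)
    by (simp add: algebra_simps Bf_self Bf_sym[of n b x] Bf_sym[of n b y] Bf_sym[of n a x] Bf_sym[of n a y] Bf_sym[of n y x])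
qed

lemma Tv_Q: assumes "Qf n a = 0" "Bf n a b = 0"
  shows "Qf n (Tv n a b x) = Qf n x"
proof -
  have aa: "Bf n a a = 0" by (simp add: assms Bf_self)
  have ba: "Bf n b a = 0" using assms Bf_sym by metis
  show ?thesis using assms aa ba
    apply (simp add: Tv_def)
    by (simp add: algebra_simps Bf_self Bf_sym[of n b x] Bf_sym[of n a x])
qed

lemma Tv_equiv: assumes "Qf n a = 0" "Bf n a b = 0"
  shows "Tv n a b (Tv n u v x) = Tv n (Tv n a b u) (Tv n a b v) (Tv n a b x)"
proof -
  have aa: "Bf n a a = 0" by (simp add: assms Bf_self)
  have ba: "Bf n b a = 0" using assms Bf_sym by metis
  have r: "Tv n (Tv n a b u) (Tv n a b v) (Tv n a b x) =
    (\<lambda>k. Tv n a b x k + (Bf n v x - Qf n v * Bf n u x) * Tv n a b u k - Bf n u x * Tv n a b v k)"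
    unfolding Tv_def[of n "Tv n a b u"] by (simp add: Tv_B Tv_Q assms)
  show ?thesis unfolding r using assms aa ba
    apply (simp add: Tv_def fun_eq_iff)
    by (simp add: algebra_simps)
qed

lemma Tv_inv: assumes "sv n a" "sv n b" "sv n w" "Qf n a = 0" "Bf n a b = 0"
  shows "Tv n a b (Tv n a (\<lambda>k. - b k) w) = w"
proof -
  have "act n (Tm n a b * Tm n a (\<lambda>k. - b k)) w = w" by (simp add: Tm_inv assms act_one)
  then show ?thesis using assms by (simp add: act_mult act_Tm)
qed

lemma Tm_conj: assumes s: "sv n a" "sv n b" "sv n u" "sv n v" and q: "Qf n a = 0" "Bf n a b = 0"
  shows "Tm n a b * Tm n u v * Tm n a (\<lambda>k. - b k) = Tm n (Tv n a b u) (Tv n a b v)"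
proof (rule mat_eq_act[of _ n])
  fix w :: "nat \<Rightarrow> 'a" assume w: "sv n w"
  let ?w' = "Tv n a (\<lambda>k. - b k) w"
  have w': "sv n ?w'" using s w by simp
  have "act n (Tm n a b * Tm n u v * Tm n a (\<lambda>k. - b k)) w = Tv n a b (Tv n u v ?w')"
    using s w w' by (simp add: act_mult act_Tm mult_carrier_mat[OF Tm_carrier Tm_carrier])
  also have "\<dots> = Tv n (Tv n a b u) (Tv n a b v) (Tv n a b ?w')" by (rule Tv_equiv[OF q])
  also have "\<dots> = Tv n (Tv n a b u) (Tv n a b v) w" using Tv_inv[OF s(1,2) w q] by simp
  also have "\<dots> = act n (Tm n (Tv n a b u) (Tv n a b v)) w" using s w by (simp add: act_Tm)
  finally show "act n (Tm n a b * Tm n u v * Tm n a (\<lambda>k. - b k)) w = act n (Tm n (Tv n a b u) (Tv n a b v)) w" .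
qed (auto intro!: mult_carrier_mat[OF mult_carrier_mat[OF Tm_carrier Tm_carrier] Tm_carrier])

lemma Tm_add1: assumes s: "sv n a1" "sv n a2" "sv n b"
  and q: "Qf n a1 = 0" "Qf n a2 = 0" "Bf n a1 a2 = 0" "Bf n a1 b = 0" "Bf n a2 b = 0"
  shows "Tm n (\<lambda>k. a1 k + a2 k) b = Tm n a1 b * Tm n a2 b * Tm n a1 (\<lambda>k. Qf n b * a2 k)"
proof (rule mat_eq_act[of _ n])
  fix w :: "nat \<Rightarrow> 'a" assume w: "sv n w"
  have aa: "Bf n a1 a1 = 0" "Bf n a2 a2 = 0" by (simp_all add: q Bf_self)
  have o: "Bf n a2 a1 = 0" "Bf n b a1 = 0" "Bf n b a2 = 0" using q Bf_sym by metis+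
  show "act n (Tm n (\<lambda>k. a1 k + a2 k) b) w = act n (Tm n a1 b * Tm n a2 b * Tm n a1 (\<lambda>k. Qf n b * a2 k)) w"
    using s w q aa o
    apply (simp add: act_mult act_Tm mult_carrier_mat[OF Tm_carrier Tm_carrier])
    apply (simp add: Tv_def fun_eq_iff)
    by (simp add: algebra_simps Bf_self)
qed (auto intro!: mult_carrier_mat[OF mult_carrier_mat[OF Tm_carrier Tm_carrier] Tm_carrier])

lemma car_prod[simp]: "A \<in> carrier_mat (2*n) (2*n) \<Longrightarrow> B \<in> carrier_mat (2*n) (2*n) \<Longrightarrow> A * B \<in> carrier_mat (2*n) (2*n)"
  by (rule mult_carrier_mat)

lemma sv_ev_pair[simp]: "p < n \<Longrightarrow> sv n (ev (2*p+1))" "p < n \<Longrightarrow> sv n (ev (2*p+2))"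
  by (auto intro!: sv_ev)

lemma Bf_evo1[simp]: "p < n \<Longrightarrow> Bf n (ev (Suc (2*p))) y = y (Suc (Suc (2*p)))"
  using Bf_ev1[of "Suc (2*p)" n y] by simp
lemma Bf_eve1[simp]: "p < n \<Longrightarrow> Bf n (ev (Suc (Suc (2*p)))) y = y (Suc (2*p))"
  using Bf_ev1[of "Suc (Suc (2*p))" n y] by simp
lemma Bf_evo2[simp]: "p < n \<Longrightarrow> Bf n y (ev (Suc (2*p))) = y (Suc (Suc (2*p)))"
  using Bf_ev2[of "Suc (2*p)" n y] by simp
lemma Bf_eve2[simp]: "p < n \<Longrightarrow> Bf n y (ev (Suc (Suc (2*p)))) = y (Suc (2*p))"
  using Bf_ev2[of "Suc (Suc (2*p))" n y] by simp
lemma Tm_one_r[simp]: "(A::'a::comm_ring_1 mat) \<in> carrier_mat (2*n) (2*n) \<Longrightarrow> A * 1\<^sub>m (2*n) = A" by (rule right_mult_one_mat)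
lemma Tm_one_l[simp]: "(A::'a::comm_ring_1 mat) \<in> carrier_mat (2*n) (2*n) \<Longrightarrow> 1\<^sub>m (2*n) * A = A" by (rule left_mult_one_mat)
lemma ev_same[simp]: "ev i i = 1" by (simp add: ev_def)

lemma COMM: assumes p: "p < n" and s: "sv n u" "sv n v"
  and z: "u (2*p+1) = 0" "u (2*p+2) = 0" "v (2*p+1) = 0" "v (2*p+2) = 0"
  and q: "Qf n u = 0" "Qf n v = 0" "Bf n u v = 0"
  shows "Tm n u v = Tm n (ev (2*p+1)) u * Tm n (ev (2*p+2)) (\<lambda>k. - v k)
                   * Tm n (ev (2*p+1)) (\<lambda>k. - u k) * Tm n (ev (2*p+2)) v"
proof -
  let ?e = "ev (2*p+1) :: nat \<Rightarrow> 'a" and ?f = "ev (2*p+2) :: nat \<Rightarrow> 'a"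
  have se: "sv n ?e" "sv n ?f" using p by auto
  have c1: "Tm n ?e u * Tm n ?f (\<lambda>k. - v k) * Tm n ?e (\<lambda>k. - u k)
      = Tm n (Tv n ?e u ?f) (Tv n ?e u (\<lambda>k. - v k))"
    by (rule Tm_conj) (use se s p z in auto)
  have t1: "Tv n ?e u ?f = (\<lambda>k. ?f k + - u k)"
    using p z q s by (simp add: Tv_def fun_eq_iff)
  have t2: "Tv n ?e u (\<lambda>k. - v k) = (\<lambda>k. - v k)"
    using p z q s by (simp add: Tv_def fun_eq_iff)
  have bu: "Bf n ?f (\<lambda>k. - u k) = 0" "Bf n ?f (\<lambda>k. - v k) = 0" "Bf n (\<lambda>k. - u k) (\<lambda>k. - v k) = 0"
    using p z q by auto
  have f3a: "Tm n (\<lambda>k. ?f k + - u k) (\<lambda>k. - v k) = Tm n ?f (\<lambda>k. - v k) * Tm n (\<lambda>k. - u k) (\<lambda>k. - v k)"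
    using Tm_add1[of n ?f "\<lambda>k. - u k" "\<lambda>k. - v k"] se s q bu by simp
  have bu2: "Bf n (\<lambda>k. - u k) ?f = 0" using bu Bf_sym by metis
  have f3b: "Tm n (\<lambda>k. - u k + ?f k) (\<lambda>k. - v k) = Tm n (\<lambda>k. - u k) (\<lambda>k. - v k) * Tm n ?f (\<lambda>k. - v k)"
    using Tm_add1[of n "\<lambda>k. - u k" ?f "\<lambda>k. - v k"] se s q bu bu2 by simp
  have eqv: "(\<lambda>k. - u k + ?f k) = (\<lambda>k. ?f k + - u k)" by (simp add: fun_eq_iff)
  have comm: "Tm n ?f (\<lambda>k. - v k) * Tm n (\<lambda>k. - u k) (\<lambda>k. - v k) = Tm n (\<lambda>k. - u k) (\<lambda>k. - v k) * Tm n ?f (\<lambda>k. - v k)"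
    using f3a f3b eqv by metis
  have inv: "Tm n ?f (\<lambda>k. - v k) * Tm n ?f v = 1\<^sub>m (2*n)"
    using Tm_inv(2)[of n ?f v] se s p z by simp
  have "Tm n ?e u * Tm n ?f (\<lambda>k. - v k) * Tm n ?e (\<lambda>k. - u k) * Tm n ?f v
      = Tm n (\<lambda>k. - u k) (\<lambda>k. - v k) * Tm n ?f (\<lambda>k. - v k) * Tm n ?f v"
    unfolding c1 t1 t2 f3a comm ..
  also have "\<dots> = Tm n (\<lambda>k. - u k) (\<lambda>k. - v k) * (Tm n ?f (\<lambda>k. - v k) * Tm n ?f v)"
    by (rule assoc_mult_mat[OF Tm_carrier Tm_carrier Tm_carrier])
  also have "\<dots> = Tm n u v" unfolding inv Tm_negneg by simp
  finally show ?thesis by simp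
qed

lemma idl_0: "is_ideal I \<Longrightarrow> 0 \<in> I" unfolding is_ideal_def by auto
lemma idl_add: "is_ideal I \<Longrightarrow> x \<in> I \<Longrightarrow> y \<in> I \<Longrightarrow> x + y \<in> I" unfolding is_ideal_def by auto
lemma idl_mult: "is_ideal I \<Longrightarrow> x \<in> I \<Longrightarrow> r * x \<in> I" unfolding is_ideal_def by auto
lemma idl_mult2: "is_ideal I \<Longrightarrow> x \<in> I \<Longrightarrow> x * r \<in> I" unfolding is_ideal_def by (metis mult.commute)
lemma idl_neg: "is_ideal I \<Longrightarrow> x \<in> I \<Longrightarrow> - x \<in> I" using idl_mult[of I x "-1"] by simp
lemma idl_diff: "is_ideal I \<Longrightarrow> x \<in> I \<Longrightarrow> y \<in> I \<Longrightarrow> x - y \<in> I"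
  using idl_add[of I x "-y"] idl_neg[of I y] by simp
lemma idl_sum: "is_ideal I \<Longrightarrow> (\<And>i. i \<in> A \<Longrightarrow> f i \<in> I) \<Longrightarrow> sum f A \<in> I"
  by (induction A rule: infinite_finite_induct) (auto simp: idl_0 idl_add)
lemma idl_Qf: "is_ideal I \<Longrightarrow> (\<And>k. v k \<in> I) \<Longrightarrow> Qf n v \<in> I"
  unfolding Qf_def by (rule idl_sum) (auto intro: idl_mult)
lemma idl_Bf: "is_ideal I \<Longrightarrow> (\<And>k. v k \<in> I) \<Longrightarrow> Bf n u v \<in> I"
  unfolding Bf_def by (rule idl_sum) (auto intro: idl_mult)

lemma gs_carrier: assumes "S \<subseteq> carrier_mat (2*n) (2*n)" "x \<in> gen_subgroup n S"
  shows "x \<in> carrier_mat (2*n) (2*n)"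
  using assms(2) by induction (use assms(1) in auto)

lemma gs_mult: assumes S: "S \<subseteq> carrier_mat (2*n) (2*n)" and a: "a \<in> gen_subgroup n S"
  and b: "b \<in> gen_subgroup n S" shows "a * b \<in> gen_subgroup n S"
  using b
proof induction
  case one then show ?case using gs_carrier[OF S a] a by simp
next
  case (gen c s)
  have "a * (c * s) = (a * c) * s"
    using gs_carrier[OF S a] gs_carrier[OF S gen.hyps(1)] gen.hyps(2) S by (auto intro!: assoc_mult_mat[symmetric])
  then show ?case using gen gen_subgroup.gen by metis
next
  case (inv c s t)
  have "a * (c * t) = (a * c) * t"
    using gs_carrier[OF S a] gs_carrier[OF S inv.hyps(1)] inv.hyps(3) by (auto intro!: assoc_mult_mat[symmetric])
  then show ?case using inv gen_subgroup.inv by metis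
qed

lemma gs_gen: assumes "S \<subseteq> carrier_mat (2*n) (2*n)" "s \<in> S" shows "s \<in> gen_subgroup n S"
proof -
  have "1\<^sub>m (2*n) * s \<in> gen_subgroup n S" by (rule gen_subgroup.gen[OF gen_subgroup.one assms(2)])
  then show ?thesis using assms by auto
qed

lemma gs_one: "1\<^sub>m (2*n) \<in> gen_subgroup n S" by (rule gen_subgroup.one)

lemma inv_unique: assumes "(s::'a::comm_ring_1 mat) \<in> carrier_mat m m" "t \<in> carrier_mat m m" "t' \<in> carrier_mat m m"
  "t * s = 1\<^sub>m m" "s * t' = 1\<^sub>m m" shows "t = t'"
proof -
  have "t = t * (s * t')" using assms by (simp add: right_mult_one_mat)
  also have "\<dots> = (t * s) * t'" using assms by (metis assoc_mult_mat)
  also have "\<dots> = t'" using assms by (simp add: left_mult_one_mat)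
  finally show ?thesis .
qed

section \<open>oe as ESD transvections\<close>

lemma oe_carrier[simp]: "oe n i j z \<in> carrier_mat (2*n) (2*n)" unfolding oe_def by simp

lemma ev_sig: "ev i (sig k) = ev (sig i) k" unfolding ev_def by (metis sig_sig)
lemma if_ev: "(if a = i \<and> b = j then z else 0) = ev i a * ev j b * z" by (simp add: ev_def)
lemma oe_T: "oe n i j z = Tm n (ev i) (\<lambda>k. z * ev (sig j) k)"
  apply (rule eq_matI)
  unfolding oe_def Tm_def
  apply (simp only: index_mat dim_row_mat dim_col_mat split)
  apply (simp only: ev_sig Qf_sc Qf_ev mult_zero_right diff_zero if_ev sig_sig)
  apply (simp_all add: algebra_simps)
  done
lemma oe_sym: "oe n i j z = oe n (sig j) (sig i) (- z)"
  apply (rule eq_matI)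
  unfolding oe_def
  apply (simp only: index_mat dim_row_mat dim_col_mat split)
  apply (simp only: if_ev sig_sig)
  apply (simp_all add: algebra_simps)
  done

lemma Tm_ev_oe: "Tm n (ev h) (\<lambda>k. z * ev m k) = oe n h (sig m) z"
  unfolding oe_T by simp

lemma oe_inv: assumes "oe_index n i j"
  shows "oe n i j z * oe n i j (- z) = 1\<^sub>m (2*n)" "oe n i j (- z) * oe n i j z = 1\<^sub>m (2*n)"
proof -
  have r: "1 \<le> i" "i \<le> 2*n" "1 \<le> j" "j \<le> 2*n" "i \<noteq> j" "i \<noteq> sig j" using assms unfolding oe_index_def by auto
  have sj: "1 \<le> sig j" "sig j \<le> 2*n" using sig_range r by auto
  have ee: "ev (sig j) (sig i) = (0::'a)" using r unfolding ev_def by auto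
  have b: "Bf n (ev i) (\<lambda>k. z * ev (sig j) k) = 0" using r ee by simp
  have e: "(\<lambda>k. - z * ev (sig j) k) = (\<lambda>k. - (z * ev (sig j) k))" by simp
  show "oe n i j z * oe n i j (- z) = 1\<^sub>m (2*n)" "oe n i j (- z) * oe n i j z = 1\<^sub>m (2*n)"
    unfolding oe_T e using Tm_inv[of n "ev i" "\<lambda>k. z * ev (sig j) k"] r sj b by auto
qed

lemma DEC: assumes S: "S \<subseteq> carrier_mat (2*n) (2*n)" and h: "1 \<le> h" "h \<le> 2*n"
  and w: "sv n w" "w (sig h) = 0"
  and f: "\<And>m. 1 \<le> m \<Longrightarrow> m \<le> 2*n \<Longrightarrow> Tm n (ev h) (\<lambda>k. w m * ev m k) \<in> gen_subgroup n S"
  shows "Tm n (ev h) w \<in> gen_subgroup n S"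
proof -
  have sh: "1 \<le> sig h" "sig h \<le> 2*n" using sig_range h by auto
  have "j \<le> 2*n \<Longrightarrow> Tm n (ev h) (\<lambda>k. if k \<le> j then w k else 0) \<in> gen_subgroup n S" for j
  proof (induction j)
    case 0
    have "(\<lambda>k. if k \<le> 0 then w k else 0) = (\<lambda>k. 0)" using w(1) unfolding sv_def by auto
    then show ?case by (simp add: gs_one)
  next
    case (Suc j)
    let ?wj = "\<lambda>k. if k \<le> j then w k else 0"
    have eq: "(\<lambda>k. if k \<le> Suc j then w k else 0) = (\<lambda>k. ?wj k + w (Suc j) * ev (Suc j) k)"
      by (auto simp: fun_eq_iff ev_def le_Suc_eq)
    have svj: "sv n ?wj" using w(1) unfolding sv_def by auto
    have sve: "sv n (\<lambda>k. w (Suc j) * ev (Suc j) k)" using Suc.prems by (intro sv_sc sv_ev) auto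
    have b1: "Bf n (ev h) ?wj = 0" using h w by simp
    have z: "w (Suc j) * ev (Suc j) (sig h) = 0" using w(2) by (cases "sig h = Suc j") (auto simp: ev_def)
    have b2: "Bf n (ev h) (\<lambda>k. w (Suc j) * ev (Suc j) k) = 0"
      using h z by simp
    have "Tm n (ev h) (\<lambda>k. if k \<le> Suc j then w k else 0) = Tm n (ev h) ?wj * Tm n (ev h) (\<lambda>k. w (Suc j) * ev (Suc j) k)"
      unfolding eq by (rule Tm_add2[symmetric]) (use h svj sve b1 b2 in auto)
    moreover have "Tm n (ev h) ?wj \<in> gen_subgroup n S" using Suc by auto
    moreover have "Tm n (ev h) (\<lambda>k. w (Suc j) * ev (Suc j) k) \<in> gen_subgroup n S"
      using f Suc.prems by auto
    ultimately show ?case using gs_mult[OF S] by metis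
  qed
  from this[of "2*n"] have "Tm n (ev h) (\<lambda>k. if k \<le> 2*n then w k else 0) \<in> gen_subgroup n S" by simp
  moreover have "(\<lambda>k. if k \<le> 2*n then w k else 0) = w" using w(1) unfolding sv_def by auto
  ultimately show ?thesis by simp
qed

lemma sig_3: "3 \<le> m \<Longrightarrow> m \<le> 2*n \<Longrightarrow> 3 \<le> sig m \<and> sig m \<le> 2*n"
  unfolding sig_def by (auto; presburger)
lemma sig_1[simp]: "sig 1 = 2" and sig_2[simp]: "sig 2 = 1" and sig_Suc0[simp]: "sig (Suc 0) = 2"
  unfolding sig_def by auto
lemma ev_ne: "k \<noteq> i \<Longrightarrow> ev i k = 0" unfolding ev_def by auto

lemma Tm_evc_zero: "Tm n a (\<lambda>k. 0 * b k) = 1\<^sub>m (2*n)"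
  by simp

locale EOset = fixes n :: nat and I :: "'a::comm_ring_1 set"
  assumes idl: "is_ideal I" and n3: "3 \<le> n"
begin

definition S1 :: "'a mat set" where
  "S1 = {oe n 1 i a | i a. 3 \<le> i \<and> i \<le> 2*n} \<union> {oe n j 1 x | j x. 3 \<le> j \<and> j \<le> 2*n \<and> x \<in> I}"
abbreviation F where "F \<equiv> gen_subgroup n S1"

lemma F_eq: "EO1_rel n I = F" unfolding EO1_rel_def S1_def ..
lemma S1c: "S1 \<subseteq> carrier_mat (2*n) (2*n)" unfolding S1_def by auto
lemma Fc: "x \<in> F \<Longrightarrow> x \<in> carrier_mat (2*n) (2*n)" using gs_carrier[OF S1c] by auto
lemma Fm: "a \<in> F \<Longrightarrow> b \<in> F \<Longrightarrow> a * b \<in> F" using gs_mult[OF S1c] by auto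
lemma F1: "1\<^sub>m (2*n) \<in> F" by (rule gs_one)
lemma genA: "3 \<le> i \<Longrightarrow> i \<le> 2*n \<Longrightarrow> oe n 1 i a \<in> F"
  by (rule gs_gen[OF S1c]) (auto simp: S1_def)
lemma genB: "3 \<le> j \<Longrightarrow> j \<le> 2*n \<Longrightarrow> x \<in> I \<Longrightarrow> oe n j 1 x \<in> F"
  by (rule gs_gen[OF S1c]) (auto simp: S1_def)
lemma genA': "3 \<le> i \<Longrightarrow> i \<le> 2*n \<Longrightarrow> oe n (Suc 0) i a \<in> F" using genA by simp
lemma genB': "3 \<le> j \<Longrightarrow> j \<le> 2*n \<Longrightarrow> x \<in> I \<Longrightarrow> oe n j (Suc 0) x \<in> F" using genB by simp

lemma E2a: assumes "sv n w" "w 2 = 0" shows "Tm n (ev 1) w \<in> F"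
proof (rule DEC[OF S1c])
  show "1 \<le> (1::nat)" "1 \<le> 2*n" using n3 by auto
  show "sv n w" "w (sig 1) = 0" using assms by auto
  fix m assume m: "1 \<le> m" "m \<le> 2*n"
  show "Tm n (ev 1) (\<lambda>k. w m * ev m k) \<in> F"
  proof (cases "m \<le> 2")
    case True
    then have "m = 1 \<or> m = 2" using m by auto
    then show ?thesis using assms by (auto simp: Tm_self F1)
  next
    case False
    then show ?thesis unfolding Tm_ev_oe using sig_3[of m n] m by (intro genA) auto
  qed
qed

lemma E2b: assumes "sv n w" "w 1 = 0" "\<And>k. w k \<in> I" shows "Tm n (ev 2) w \<in> F"
proof (rule DEC[OF S1c])
  show "1 \<le> (2::nat)" "2 \<le> 2*n" using n3 by auto
  show "sv n w" "w (sig 2) = 0" using assms by auto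
  fix m assume m: "1 \<le> m" "m \<le> 2*n"
  show "Tm n (ev 2) (\<lambda>k. w m * ev m k) \<in> F"
  proof (cases "m \<le> 2")
    case True
    then have "m = 1 \<or> m = 2" using m by auto
    then show ?thesis using assms by (auto simp: Tm_self F1)
  next
    case False
    have "Tm n (ev 2) (\<lambda>k. w m * ev m k) = oe n m 1 (- w m)"
      unfolding Tm_ev_oe by (subst oe_sym) simp
    then show ?thesis using False m assms(3) idl_neg[OF idl] genB[of m "- w m"] by auto
  qed
qed

lemma E3: assumes s: "sv n u" "sv n v"
  and z: "u 1 = 0" "u 2 = 0" "v 1 = 0" "v 2 = 0"
  and q: "Qf n u = 0" "Qf n v = 0" "Bf n u v = 0" and vI: "\<And>k. v k \<in> I"
  shows "Tm n u v \<in> F"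
proof -
  have "Tm n u v = Tm n (ev 1) u * Tm n (ev 2) (\<lambda>k. - v k) * Tm n (ev 1) (\<lambda>k. - u k) * Tm n (ev 2) v"
    using COMM[of 0 n u v] n3 s z q by (simp add: numeral_2_eq_2)
  moreover have "Tm n (ev 1) u \<in> F" "Tm n (ev 1) (\<lambda>k. - u k) \<in> F" using E2a s z by auto
  moreover have "Tm n (ev 2) v \<in> F" "Tm n (ev 2) (\<lambda>k. - v k) \<in> F"
    using E2b s z vI idl_neg[OF idl] by auto
  ultimately show ?thesis using Fm by metis
qed

lemma E4: assumes "oe_index n i j" "x \<in> I" shows "oe n i j x \<in> F"
proof -
  have r: "1 \<le> i" "i \<le> 2*n" "1 \<le> j" "j \<le> 2*n" "i \<noteq> j" "i \<noteq> sig j" using assms unfolding oe_index_def by auto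
  have nx: "- x \<in> I" using idl_neg[OF idl assms(2)] .
  consider "i = 1" | "j = 1" | "i = 2" | "j = 2" | "3 \<le> i \<and> 3 \<le> j" using r by linarith
  then show ?thesis
  proof cases
    case 1
    then have "3 \<le> j" using r by (cases "j = 2") auto
    then show ?thesis using 1 r genA[of j x] by simp
  next
    case 2
    then have "3 \<le> i" using r by (cases "i = 2") auto
    then show ?thesis using 2 r genB[of i x] assms by simp
  next
    case 3
    then have "j \<noteq> 1" using r by auto
    then have j3: "3 \<le> j" using 3 r by auto
    have "oe n i j x = oe n (sig j) 1 (- x)" using 3 by (subst oe_sym) simp
    moreover have "3 \<le> sig j \<and> sig j \<le> 2*n" using j3 r sig_3[of j n] by auto
    ultimately show ?thesis using nx genB[of "sig j" "- x"] by simp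
  next
    case 4
    then have i3: "3 \<le> i" using r by (cases "i = 1") auto
    have "oe n i j x = oe n 1 (sig i) (- x)" using 4 by (subst oe_sym) simp
    moreover have "3 \<le> sig i \<and> sig i \<le> 2*n" using i3 r sig_3[of i n] by auto
    ultimately show ?thesis using genA[of "sig i" "- x"] by simp
  next
    case 5
    have sj: "3 \<le> sig j" "sig j \<le> 2*n" using 5 r sig_3[of j n] by auto
    have ee: "ev (sig j) (sig i) = (0::'a)" using r unfolding ev_def by auto
    have e1: "ev i 1 = (0::'a)" "ev i 2 = (0::'a)" "ev (sig j) 1 = (0::'a)" "ev (sig j) 2 = (0::'a)"
      using 5 sj by (auto intro!: ev_ne)
    have svs: "sv n (ev i)" "sv n (ev (sig j))" using r sj by auto
    have inI: "\<And>k. x * ev (sig j) k \<in> I" using assms(2) idl_mult2[OF idl] by auto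
    have sv2: "sv n (\<lambda>k. x * ev (sig j) k)" by (rule sv_sc[OF svs(2)])
    show ?thesis unfolding oe_T
      by (rule E3) (use svs sv2 e1 ee inI r in auto)
  qed
qed

lemma Eh: assumes h: "1 \<le> h" "h \<le> 2*n" and w: "sv n w" "w (sig h) = 0" "\<And>k. w k \<in> I"
  shows "Tm n (ev h) w \<in> F"
proof (rule DEC[OF S1c h w(1,2)])
  fix m assume m: "1 \<le> m" "m \<le> 2*n"
  show "Tm n (ev h) (\<lambda>k. w m * ev m k) \<in> F"
  proof (cases "m = h \<or> m = sig h")
    case True
    then show ?thesis using w by (auto simp: Tm_self F1)
  next
    case False
    have "oe_index n h (sig m)" unfolding oe_index_def using False h m sig_range[of m n] by auto
    then show ?thesis unfolding Tm_ev_oe using E4 w(3) by auto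
  qed
qed

end

lemma massoc: "(A::'a::comm_ring_1 mat) \<in> carrier_mat (2*n) (2*n) \<Longrightarrow> B \<in> carrier_mat (2*n) (2*n) \<Longrightarrow>
  C \<in> carrier_mat (2*n) (2*n) \<Longrightarrow> A * B * C = A * (B * C)"
  by (rule assoc_mult_mat)

context EOset begin

definition Nzs :: "'a mat \<Rightarrow> 'a mat \<Rightarrow> bool" where
  "Nzs s s' \<longleftrightarrow> s \<in> carrier_mat (2*n) (2*n) \<and> s' \<in> carrier_mat (2*n) (2*n) \<and>
     s * s' = 1\<^sub>m (2*n) \<and> s' * s = 1\<^sub>m (2*n) \<and> (\<forall>X\<in>F. s * X * s' \<in> F)"

lemma Nzs_one: "Nzs (1\<^sub>m (2*n)) (1\<^sub>m (2*n))"
  unfolding Nzs_def using Fc by auto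

lemma Nzs_mult: assumes "Nzs s s'" "Nzs r r'" shows "Nzs (s * r) (r' * s')"
proof -
  have c: "s \<in> carrier_mat (2*n) (2*n)" "s' \<in> carrier_mat (2*n) (2*n)"
    "r \<in> carrier_mat (2*n) (2*n)" "r' \<in> carrier_mat (2*n) (2*n)" using assms unfolding Nzs_def by auto
  have i: "s * s' = 1\<^sub>m (2*n)" "s' * s = 1\<^sub>m (2*n)" "r * r' = 1\<^sub>m (2*n)" "r' * r = 1\<^sub>m (2*n)"
    using assms unfolding Nzs_def by auto
  have "s * r * (r' * s') = s * (r * r') * s'" using c by (simp add: massoc)
  then have 1: "s * r * (r' * s') = 1\<^sub>m (2*n)" using i c by simp
  have "r' * s' * (s * r) = r' * (s' * s) * r" using c by (simp add: massoc)
  then have 2: "r' * s' * (s * r) = 1\<^sub>m (2*n)" using i c by simp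
  have 3: "s * r * X * (r' * s') \<in> F" if X: "X \<in> F" for X
  proof -
    have Xc: "X \<in> carrier_mat (2*n) (2*n)" using Fc X by auto
    have "s * r * X * (r' * s') = s * (r * X * r') * s'" using c Xc by (simp add: massoc)
    moreover have "r * X * r' \<in> F" using assms(2) X unfolding Nzs_def by auto
    ultimately show ?thesis using assms(1) unfolding Nzs_def by auto
  qed
  show ?thesis unfolding Nzs_def using c 1 2 3 by auto
qed

lemma Nzs_F: assumes "s \<in> F" "s' \<in> F" "s * s' = 1\<^sub>m (2*n)" "s' * s = 1\<^sub>m (2*n)" shows "Nzs s s'"
  unfolding Nzs_def using assms Fc Fm by auto

lemma S1_cases: "g \<in> S1 \<Longrightarrow> (\<exists>m a. 3 \<le> m \<and> m \<le> 2*n \<and> g = oe n 1 m a) \<or> (\<exists>m x. 3 \<le> m \<and> m \<le> 2*n \<and> x \<in> I \<and> g = oe n m 1 x)"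
  unfolding S1_def by auto

lemma S1_inv: assumes "g \<in> S1" "t \<in> carrier_mat (2*n) (2*n)" "g * t = 1\<^sub>m (2*n)" "t * g = 1\<^sub>m (2*n)"
  shows "t \<in> S1"
proof -
  from S1_cases[OF assms(1)] show ?thesis
  proof (elim disjE exE conjE)
    fix m a assume m: "3 \<le> m" "m \<le> 2*n" "g = oe n 1 m a"
    have oi: "oe_index n 1 m" unfolding oe_index_def using m sig_3[of m n] by auto
    have gc: "g \<in> carrier_mat (2*n) (2*n)" using m by simp
    have "t = oe n 1 m (- a)"
      by (rule inv_unique[OF gc assms(2) oe_carrier assms(4)]) (use oe_inv(1)[OF oi] m in simp)
    then show ?thesis using m unfolding S1_def by blast
  next
    fix m x assume m: "3 \<le> m" "m \<le> 2*n" "x \<in> I" "g = oe n m 1 x"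
    have oi: "oe_index n m 1" unfolding oe_index_def using m by auto
    have gc: "g \<in> carrier_mat (2*n) (2*n)" using m by simp
    have "t = oe n m 1 (- x)"
      by (rule inv_unique[OF gc assms(2) oe_carrier assms(4)]) (use oe_inv(1)[OF oi] m in simp)
    moreover have "- x \<in> I" using idl_neg[OF idl m(3)] .
    ultimately show ?thesis using m unfolding S1_def by blast
  qed
qed

lemma norm_crit: assumes c: "s \<in> carrier_mat (2*n) (2*n)" "s' \<in> carrier_mat (2*n) (2*n)"
  and i: "s * s' = 1\<^sub>m (2*n)" "s' * s = 1\<^sub>m (2*n)"
  and g: "\<And>g. g \<in> S1 \<Longrightarrow> s * g * s' \<in> F"
  shows "Nzs s s'"
proof -
  have "X \<in> F \<Longrightarrow> s * X * s' \<in> F" for X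
  proof (induction rule: gen_subgroup.induct)
    case one then show ?case using c i F1 by simp
  next
    case (gen X0 g)
    have X0c: "X0 \<in> carrier_mat (2*n) (2*n)" using Fc gen.hyps(1) by auto
    have gc: "g \<in> carrier_mat (2*n) (2*n)" using S1c gen.hyps(2) by auto
    have "s * (X0 * g) * s' = (s * X0 * s') * (s * g * s')"
    proof -
      have "(s * X0 * s') * (s * g * s') = s * X0 * (s' * s) * g * s'"
        using c X0c gc by (simp add: massoc)
      also have "\<dots> = s * (X0 * g) * s'" using i c X0c gc by (simp add: massoc)
      finally show ?thesis by simp
    qed
    then show ?case using gen g Fm by metis
  next
    case (inv X0 g t)
    have "t \<in> S1" using S1_inv inv.hyps by auto
    have X0c: "X0 \<in> carrier_mat (2*n) (2*n)" using Fc inv.hyps(1) by auto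
    have gc: "t \<in> carrier_mat (2*n) (2*n)" using inv.hyps by auto
    have "s * (X0 * t) * s' = (s * X0 * s') * (s * t * s')"
    proof -
      have "(s * X0 * s') * (s * t * s') = s * X0 * (s' * s) * t * s'"
        using c X0c gc by (simp add: massoc)
      also have "\<dots> = s * (X0 * t) * s'" using i c X0c gc by (simp add: massoc)
      finally show ?thesis by simp
    qed
    then show ?case using inv g Fm \<open>t \<in> S1\<close> by metis
  qed
  then show ?thesis unfolding Nzs_def using c i by auto
qed

end

context EOset begin

lemma conj_oe: fixes c :: 'a and u v :: "nat \<Rightarrow> 'a" assumes "oe_index n i j" "sv n u" "sv n v"
  shows "oe n i j c * Tm n u v * oe n i j (- c) = Tm n (Tv n (ev i) (\<lambda>k. c * ev (sig j) k) u) (Tv n (ev i) (\<lambda>k. c * ev (sig j) k) v)"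
proof -
  have r: "1 \<le> i" "i \<le> 2*n" "1 \<le> j" "j \<le> 2*n" "i \<noteq> j" "i \<noteq> sig j" using assms unfolding oe_index_def by auto
  have sj: "1 \<le> sig j" "sig j \<le> 2*n" using sig_range r by auto
  have ee: "ev (sig j) (sig i) = (0::'a)" "ev i j = (0::'a)" using r unfolding ev_def by auto
  have e: "(\<lambda>k. - c * ev (sig j) k) = (\<lambda>k. - (c * ev (sig j) k))" by simp
  show ?thesis unfolding oe_T e
    by (rule Tm_conj) (use r sj ee assms in auto)
qed

lemma NORM_C: assumes ij: "3 \<le> i" "i \<le> 2*n" "3 \<le> j" "j \<le> 2*n" "oe_index n i j"
  shows "Nzs (oe n i j c) (oe n i j (- c))"
proof (rule norm_crit)
  show "oe n i j c * oe n i j (- c) = 1\<^sub>m (2 * n)" "oe n i j (- c) * oe n i j c = 1\<^sub>m (2 * n)"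
    using oe_inv[OF ij(5)] by auto
  have r: "i \<noteq> j" "i \<noteq> sig j" using ij(5) unfolding oe_index_def by auto
  have s3: "3 \<le> sig i" "sig i \<le> 2*n" "3 \<le> sig j" "sig j \<le> 2*n" using sig_3 ij by auto
  let ?b = "\<lambda>k. c * ev (sig j) k"
  have z: "ev 1 j = (0::'a)" "ev 1 (sig i) = (0::'a)" "ev 2 (sig i) = (0::'a)" "ev 2 j = (0::'a)"
    "ev i 1 = (0::'a)" "ev i 2 = (0::'a)" "ev (sig j) 1 = (0::'a)" "ev (sig j) 2 = (0::'a)"
    "ev (sig j) (sig i) = (0::'a)"
    using ij s3 r by (auto intro!: ev_ne)
  have qa: "Qf n (ev i) = 0" "Bf n (ev i) ?b = 0" using ij z by auto
  fix g assume g: "g \<in> S1"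
  from S1_cases[OF g] show "oe n i j c * g * oe n i j (- c) \<in> F"
  proof (elim disjE exE conjE)
    fix m a assume m: "3 \<le> m" "m \<le> 2*n" "g = oe n 1 m a"
    have s3m: "3 \<le> sig m" "sig m \<le> 2*n" using sig_3 m by auto
    have zm: "ev (sig m) 2 = (0::'a)" using s3m by (auto intro!: ev_ne)
    have g': "g = Tm n (ev 1) (\<lambda>k. a * ev (sig m) k)" using m oe_T by simp
    have t1: "Tv n (ev i) ?b (ev 1) = ev 1" using ij z n3 by (simp add: Tv_def)
    have "oe n i j c * g * oe n i j (- c) = Tm n (ev 1) (Tv n (ev i) ?b (\<lambda>k. a * ev (sig m) k))"
      unfolding g' using conj_oe[OF ij(5), of "ev 1" "\<lambda>k. a * ev (sig m) k" c] t1 n3 s3m by simp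
    moreover have "Tm n (ev 1) (Tv n (ev i) ?b (\<lambda>k. a * ev (sig m) k)) \<in> F"
    proof (rule E2a)
      have "sv n (ev i :: nat \<Rightarrow> 'a)" "sv n (ev (sig j) :: nat \<Rightarrow> 'a)" "sv n (ev (sig m) :: nat \<Rightarrow> 'a)" using ij s3m s3 by auto
      then show "sv n (Tv n (ev i) ?b (\<lambda>k. a * ev (sig m) k))" by simp
      show "Tv n (ev i) ?b (\<lambda>k. a * ev (sig m) k) 2 = 0" using z zm by (simp add: Tv_def)
    qed
    ultimately show ?thesis by simp
  next
    fix m x assume m: "3 \<le> m" "m \<le> 2*n" "x \<in> I" "g = oe n m 1 x"
    have zm: "ev m 1 = (0::'a)" using m by (auto intro!: ev_ne)
    have g': "g = Tm n (ev m) (\<lambda>k. x * ev 2 k)" using m by (simp add: oe_T)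
    have t2: "Tv n (ev i) ?b (\<lambda>k. x * ev 2 k) = (\<lambda>k. x * ev 2 k)" using ij z n3 by (simp add: Tv_def)
    let ?y = "Tv n (ev i) ?b (ev m)"
    have svy: "sv n ?y" using ij m s3 by simp
    have qy: "Qf n ?y = 0" using Tv_Q[OF qa] by simp
    have y1: "?y 1 = 0" using z zm by (simp add: Tv_def)
    have "oe n i j c * g * oe n i j (- c) = Tm n ?y (\<lambda>k. x * ev 2 k)"
      unfolding g' using conj_oe[OF ij(5), of "ev m" "\<lambda>k. x * ev 2 k" c] t2 n3 m by simp
    also have "\<dots> = Tm n (\<lambda>k. - (x * ev 2 k)) ?y" by (rule Tm_sym) (use qy in simp_all)
    also have "\<dots> = Tm n (\<lambda>k. (- x) * ev 2 k) ?y" by simp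
    also have "\<dots> = Tm n (ev 2) (\<lambda>k. (- x) * ?y k)" by (rule Tm_scale)
    finally have eq: "oe n i j c * g * oe n i j (- c) = Tm n (ev 2) (\<lambda>k. (- x) * ?y k)" .
    have "Tm n (ev 2) (\<lambda>k. (- x) * ?y k) \<in> F"
      by (rule E2b) (use svy y1 idl_mult2[OF idl idl_neg[OF idl m(3)]] in auto)
    then show ?thesis using eq by simp
  qed
qed (auto)

lemma NzA: "3 \<le> m \<Longrightarrow> m \<le> 2*n \<Longrightarrow> Nzs (oe n 1 m a) (oe n 1 m (- a))"
proof -
  assume m: "3 \<le> m" "m \<le> 2*n"
  have oi: "oe_index n 1 m" unfolding oe_index_def using m sig_3[of m n] by auto
  show ?thesis by (rule Nzs_F) (use genA m oe_inv[OF oi] in auto)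
qed

end

context EOset begin

lemma Nzs_elem: assumes h: "3 \<le> h" "h \<le> 2*n" and m: "1 \<le> m" "m \<le> 2*n"
  and c0: "m = sig h \<or> m = 2 \<Longrightarrow> c = 0"
  shows "Nzs (Tm n (ev h) (\<lambda>k. c * ev m k)) (Tm n (ev h) (\<lambda>k. (- c) * ev m k))"
proof -
  have sh: "3 \<le> sig h" "sig h \<le> 2*n" using sig_3 h by auto
  consider "m = h" | "m = sig h \<or> m = 2" | "m = 1" | "3 \<le> m \<and> m \<noteq> h \<and> m \<noteq> sig h" using m by linarith
  then show ?thesis
  proof cases
    case 1 then show ?thesis using Tm_self[of n "ev h :: nat \<Rightarrow> 'a" c] Tm_self[of n "ev h :: nat \<Rightarrow> 'a" "- c"] Nzs_one by simp
  next
    case 2 then show ?thesis using c0 Nzs_one by simp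
  next
    case 3
    have "Tm n (ev h) (\<lambda>k. c * ev m k) = oe n 1 (sig h) (- c)"
      unfolding Tm_ev_oe 3 by (subst oe_sym) simp
    moreover have "Tm n (ev h) (\<lambda>k. (- c) * ev m k) = oe n 1 (sig h) (- (- c))"
      unfolding Tm_ev_oe 3 by (subst oe_sym) simp
    ultimately show ?thesis using NzA[OF sh, of "- c"] by simp
  next
    case 4
    have s3: "3 \<le> sig m" "sig m \<le> 2*n" using sig_3 4 m by auto
    have oi: "oe_index n h (sig m)" unfolding oe_index_def using 4 h s3 by auto
    show ?thesis unfolding Tm_ev_oe using NORM_C[OF h s3 oi] by simp
  qed
qed

lemma NORM: assumes h: "3 \<le> h" "h \<le> 2*n" and w: "sv n w" "w (sig h) = 0" "w 2 = 0"
  shows "Nzs (Tm n (ev h) w) (Tm n (ev h) (\<lambda>k. - w k))"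
proof -
  have sh: "1 \<le> sig h" "sig h \<le> 2*n" using sig_range h by auto
  have "j \<le> 2*n \<Longrightarrow> Nzs (Tm n (ev h) (\<lambda>k. if k \<le> j then w k else 0)) (Tm n (ev h) (\<lambda>k. - (if k \<le> j then w k else 0)))" for j
  proof (induction j)
    case 0
    have "(\<lambda>k. if k \<le> 0 then w k else 0) = (\<lambda>k. 0)" "(\<lambda>k. - (if k \<le> 0 then w k else 0)) = (\<lambda>k. 0)"
      using w(1) unfolding sv_def by auto
    then show ?case using Nzs_one by simp
  next
    case (Suc j)
    let ?wj = "\<lambda>k. if k \<le> j then w k else 0"
    let ?c = "w (Suc j)"
    have eq: "(\<lambda>k. if k \<le> Suc j then w k else 0) = (\<lambda>k. ?wj k + ?c * ev (Suc j) k)"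
      by (auto simp: fun_eq_iff ev_def le_Suc_eq)
    have eq2: "(\<lambda>k. - (if k \<le> Suc j then w k else 0)) = (\<lambda>k. (- ?c) * ev (Suc j) k + - ?wj k)"
      by (auto simp: fun_eq_iff ev_def le_Suc_eq)
    have svj: "sv n ?wj" using w(1) unfolding sv_def by auto
    have sve: "sv n (\<lambda>k. ?c * ev (Suc j) k)" "sv n (\<lambda>k. (- ?c) * ev (Suc j) k)" using Suc.prems by (auto intro!: sv_sc sv_ev)
    have b1: "Bf n (ev h) ?wj = 0" "Bf n (ev h) (\<lambda>k. - ?wj k) = 0" using h w by auto
    have z: "?c * ev (Suc j) (sig h) = 0" using w(2) by (cases "sig h = Suc j") (auto simp: ev_def)
    have b2: "Bf n (ev h) (\<lambda>k. ?c * ev (Suc j) k) = 0" "Bf n (ev h) (\<lambda>k. (- ?c) * ev (Suc j) k) = 0"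
      using h z by auto
    have hs: "1 \<le> h" "h \<le> 2*n" using h by auto
    have m1: "Tm n (ev h) (\<lambda>k. if k \<le> Suc j then w k else 0) = Tm n (ev h) ?wj * Tm n (ev h) (\<lambda>k. ?c * ev (Suc j) k)"
      unfolding eq by (rule Tm_add2[symmetric]) (use hs svj sve b1 b2 in auto)
    have m2: "Tm n (ev h) (\<lambda>k. - (if k \<le> Suc j then w k else 0)) = Tm n (ev h) (\<lambda>k. (- ?c) * ev (Suc j) k) * Tm n (ev h) (\<lambda>k. - ?wj k)"
      unfolding eq2 by (rule Tm_add2[symmetric]) (use hs svj sve b1 b2 in auto)
    have ne: "Nzs (Tm n (ev h) (\<lambda>k. ?c * ev (Suc j) k)) (Tm n (ev h) (\<lambda>k. (- ?c) * ev (Suc j) k))"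
      by (rule Nzs_elem[OF h]) (use Suc.prems w in \<open>auto simp: numeral_2_eq_2\<close>)
    show ?case unfolding m1 m2 by (rule Nzs_mult[OF _ ne]) (use Suc in auto)
  qed
  from this[of "2*n"] have "Nzs (Tm n (ev h) (\<lambda>k. if k \<le> 2*n then w k else 0)) (Tm n (ev h) (\<lambda>k. - (if k \<le> 2*n then w k else 0)))" by simp
  moreover have "(\<lambda>k. if k \<le> 2*n then w k else 0) = w" "(\<lambda>k. - (if k \<le> 2*n then w k else 0)) = (\<lambda>k. - w k)"
    using w(1) unfolding sv_def by auto
  ultimately show ?thesis by simp
qed

end

context EOset begin

lemma Nzs_conj: "Nzs s s' \<Longrightarrow> X \<in> F \<Longrightarrow> s * X * s' \<in> F" unfolding Nzs_def by auto

lemma E6: fixes u0 v0 :: "nat \<Rightarrow> 'a"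
  assumes q: "1 \<le> q" "q < n" and s: "sv n u0" "sv n v0" and u2: "u0 2 = 0"
  and z: "u0 (2*q+1) = 0" "u0 (2*q+2) = 0" "v0 (2*q+1) = 0" "v0 (2*q+2) = 0"
  and qq: "Qf n u0 = 0" "Qf n v0 = 0" "Bf n u0 v0 = 0" and vI: "\<And>k. v0 k \<in> I"
  shows "Tm n u0 v0 \<in> F"
proof -
  have eq: "Tm n u0 v0 = Tm n (ev (2*q+1)) u0 * Tm n (ev (2*q+2)) (\<lambda>k. - v0 k)
                   * Tm n (ev (2*q+1)) (\<lambda>k. - u0 k) * Tm n (ev (2*q+2)) v0"
    by (rule COMM[OF q(2) s z qq])
  have nz: "Nzs (Tm n (ev (2*q+1)) u0) (Tm n (ev (2*q+1)) (\<lambda>k. - u0 k))"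
    by (rule NORM) (use q s u2 z sig_odd in auto)
  have h1: "Tm n (ev (2*q+2)) (\<lambda>k. - v0 k) \<in> F"
    by (rule Eh) (use q s z sig_even vI idl_neg[OF idl] in auto)
  have h2: "Tm n (ev (2*q+2)) v0 \<in> F"
    by (rule Eh) (use q s z sig_even vI in auto)
  show ?thesis unfolding eq using Nzs_conj[OF nz h1] h2 Fm by simp
qed

end

lemma reassoc1: "(A::'a::comm_ring_1 mat) \<in> carrier_mat (2*n) (2*n) \<Longrightarrow> B \<in> carrier_mat (2*n) (2*n) \<Longrightarrow> C \<in> carrier_mat (2*n) (2*n)
 \<Longrightarrow> D \<in> carrier_mat (2*n) (2*n) \<Longrightarrow> E \<in> carrier_mat (2*n) (2*n) \<Longrightarrow> G \<in> carrier_mat (2*n) (2*n)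
 \<Longrightarrow> A * B * C * (D * E * G) = A * B * (C * D) * E * G"
  by (simp add: massoc)
lemma reassoc2: "(A::'a::comm_ring_1 mat) \<in> carrier_mat (2*n) (2*n) \<Longrightarrow> B \<in> carrier_mat (2*n) (2*n) \<Longrightarrow> C \<in> carrier_mat (2*n) (2*n)
 \<Longrightarrow> D \<in> carrier_mat (2*n) (2*n) \<Longrightarrow> A * B * C * D = A * (B * C) * D"
  by (simp add: massoc)

context EOset begin

lemma KEY: fixes v :: "nat \<Rightarrow> 'a" and c :: 'a
  assumes p: "1 \<le> p" "p < n" and sv: "sv n v" and z: "v (2*p+1) = 0" "v (2*p+2) = 0" and vI: "\<And>k. v k \<in> I"
  and qv: "Qf n v = 0"
  shows "Tm n (ev (2*p+1)) (\<lambda>k. c * ev 2 k) * Tm n (ev (2*p+2)) v * Tm n (ev (2*p+1)) (\<lambda>k. - (c * ev 2 k)) \<in> F"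
proof -
  define e :: "nat \<Rightarrow> 'a" where "e = ev (2*p+1)"
  define f :: "nat \<Rightarrow> 'a" where "f = ev (2*p+2)"
  define y where "y = v 1"
  define b0 where "b0 = (\<lambda>k. v k - y * ev 1 k)"
  define bt where "bt = (\<lambda>k. c * ev 2 k)"
  have ex: "\<exists>q. 1 \<le> q \<and> q < n \<and> q \<noteq> p"
  proof (cases "p = 1")
    case True then show ?thesis using n3 by (intro exI[of _ 2]) auto
  next
    case False then show ?thesis using n3 p by (intro exI[of _ 1]) auto
  qed
  then obtain q where q: "1 \<le> q" "q < n" "q \<noteq> p" by blast
  have evs: "ev 2 (2*p+2) = (0::'a)" "ev 2 (2*p+1) = (0::'a)" "ev 1 (2*p+1) = (0::'a)" "ev 1 (2*p+2) = (0::'a)"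
    "e 1 = 0" "e 2 = 0" "f 1 = 0" "f 2 = 0" "e (2*p+2) = 0" "f (2*p+1) = 0" "e (2*p+1) = 1" "f (2*p+2) = 1"
    "ev 1 (2*q+1) = (0::'a)" "ev 1 (2*q+2) = (0::'a)" "ev 2 (2*q+1) = (0::'a)" "ev 2 (2*q+2) = (0::'a)"
    "e (2*q+1) = 0" "e (2*q+2) = 0" "f (2*q+1) = 0" "f (2*q+2) = 0" "ev 1 2 = (0::'a)" "ev 2 1 = (0::'a)"
    using p q unfolding e_def f_def by (auto simp: ev_def)
  have sve: "sv n e" "sv n f" "sv n (ev 1 :: nat \<Rightarrow> 'a)" "sv n (ev 2 :: nat \<Rightarrow> 'a)"
    using p n3 unfolding e_def f_def by auto
  have Be: "Bf n e w = w (2*p+2)" "Bf n f w = w (2*p+1)" "Bf n w e = w (2*p+2)" "Bf n w f = w (2*p+1)" for w :: "nat \<Rightarrow> 'a"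
    using p unfolding e_def f_def by (auto simp: sig_odd sig_even)
  have B12: "Bf n (ev 1) w = w 2" "Bf n (ev 2) w = w 1" "Bf n w (ev 1) = w 2" "Bf n w (ev 2) = w 1" for w :: "nat \<Rightarrow> 'a"
    using n3 by auto
  have yI: "y \<in> I" using vI unfolding y_def .
  have b0I: "\<And>k. b0 k \<in> I" unfolding b0_def using vI yI idl_diff[OF idl] idl_mult2[OF idl] by auto
  have svb0: "sv n b0" "sv n bt" unfolding b0_def bt_def using sv sve by auto
  have b0z: "b0 1 = 0" "b0 (2*p+1) = 0" "b0 (2*p+2) = 0" unfolding b0_def y_def using z evs by (auto simp: ev_def)
  have qe: "Qf n e = 0" "Qf n f = 0" "Qf n bt = 0" unfolding e_def f_def bt_def by auto
  have Bebt: "Bf n e bt = 0" unfolding bt_def using Be evs by simp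
  have vsplit: "Tm n f v = Tm n f b0 * Tm n f (\<lambda>k. y * ev 1 k)"
  proof -
    have "v = (\<lambda>k. b0 k + y * ev 1 k)" unfolding b0_def by auto
    moreover have "Tm n f b0 * Tm n f (\<lambda>k. y * ev 1 k) = Tm n f (\<lambda>k. b0 k + y * ev 1 k)"
      by (rule Tm_add2) (use sve svb0 qe b0z Be evs in auto)
    ultimately show ?thesis by simp
  qed
  let ?be = "Tm n e bt" and ?be' = "Tm n e (\<lambda>k. - bt k)"
  have inv: "?be' * ?be = 1\<^sub>m (2*n)" using Tm_inv(2)[OF sve(1) svb0(2) qe(1) Bebt] .
  have split2: "?be * Tm n f v * ?be' = (?be * Tm n f b0 * ?be') * (?be * Tm n f (\<lambda>k. y * ev 1 k) * ?be')"
  proof -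
    have c: "?be \<in> carrier_mat (2*n) (2*n)" "?be' \<in> carrier_mat (2*n) (2*n)"
      "Tm n f b0 \<in> carrier_mat (2*n) (2*n)" "Tm n f (\<lambda>k. y * ev 1 k) \<in> carrier_mat (2*n) (2*n)" by auto
    have "(?be * Tm n f b0 * ?be') * (?be * Tm n f (\<lambda>k. y * ev 1 k) * ?be')
        = ?be * Tm n f b0 * (?be' * ?be) * Tm n f (\<lambda>k. y * ev 1 k) * ?be'"
      by (rule reassoc1[of _ n]) (use c in auto)
    also have "\<dots> = ?be * Tm n f b0 * Tm n f (\<lambda>k. y * ev 1 k) * ?be'" unfolding inv using c by simp
    also have "\<dots> = ?be * Tm n f v * ?be'" unfolding vsplit by (rule reassoc2[of _ n]) (use c in auto)
    finally show ?thesis by simp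
  qed
  have Tvf: "Tv n e bt f = (\<lambda>k. f k + - (c * ev 2 k))"
    unfolding bt_def Tv_def using Be B12 evs qe by (simp add: fun_eq_iff)
  have Tvb0: "Tv n e bt b0 = b0"
    unfolding bt_def Tv_def using Be B12 evs b0z by (simp add: fun_eq_iff)
  have Tvy: "Tv n e bt (\<lambda>k. y * ev 1 k) = (\<lambda>k. y * (ev 1 k + c * e k))"
    unfolding bt_def Tv_def using Be B12 evs by (simp add: fun_eq_iff algebra_simps)
  have c1: "?be * Tm n f b0 * ?be' = Tm n (\<lambda>k. f k + - (c * ev 2 k)) b0"
    using Tm_conj[OF sve(1) svb0(2) sve(2) svb0(1) qe(1) Bebt] Tvf Tvb0 by simp
  have c2: "?be * Tm n f (\<lambda>k. y * ev 1 k) * ?be' = Tm n (\<lambda>k. f k + - (c * ev 2 k)) (\<lambda>k. y * (ev 1 k + c * e k))"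
    using Tm_conj[OF sve(1) svb0(2) sve(2), of "\<lambda>k. y * ev 1 k"] Tvf Tvy qe(1) Bebt sve by simp
  have F1: "Tm n (\<lambda>k. f k + - (c * ev 2 k)) b0 \<in> F"
  proof -
    have e1: "Tm n (\<lambda>k. f k + - (c * ev 2 k)) b0 = Tm n f b0 * Tm n (\<lambda>k. - (c * ev 2 k)) b0 * Tm n f (\<lambda>k. Qf n b0 * - (c * ev 2 k))"
      by (rule Tm_add1) (use sve svb0 qe Be B12 evs b0z in auto)
    have a: "Tm n f b0 \<in> F" unfolding f_def by (rule Eh) (use p svb0 b0z b0I sig_even in auto)
    have "Tm n (\<lambda>k. - (c * ev 2 k)) b0 = Tm n (\<lambda>k. (- c) * ev 2 k) b0" by simp
    also have "\<dots> = Tm n (ev 2) (\<lambda>k. (- c) * b0 k)" by (rule Tm_scale)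
    finally have "Tm n (\<lambda>k. - (c * ev 2 k)) b0 = Tm n (ev 2) (\<lambda>k. (- c) * b0 k)" .
    moreover have "Tm n (ev 2) (\<lambda>k. (- c) * b0 k) \<in> F"
      by (rule E2b) (use svb0 b0z b0I idl_mult[OF idl] idl_neg[OF idl] in auto)
    ultimately have b: "Tm n (\<lambda>k. - (c * ev 2 k)) b0 \<in> F" by simp
    have QI: "Qf n b0 \<in> I" using idl_Qf[OF idl b0I] .
    have cc: "Tm n f (\<lambda>k. Qf n b0 * - (c * ev 2 k)) \<in> F" unfolding f_def
      by (rule Eh) (use p n3 sig_even evs QI idl_mult2[OF idl] idl_neg[OF idl] in \<open>auto simp: f_def\<close>)
    show ?thesis unfolding e1 using a b cc Fm by simp
  qed
  have F2: "Tm n (\<lambda>k. f k + - (c * ev 2 k)) (\<lambda>k. y * (ev 1 k + c * e k)) \<in> F"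
  proof -
    let ?aa = "\<lambda>k. f k + - (c * ev 2 k)" and ?bb = "\<lambda>k. ev 1 k + c * e k"
    have qa: "Qf n ?aa = 0" "Qf n ?bb = 0" using qe Be B12 evs by auto
    have "Tm n ?aa (\<lambda>k. y * ?bb k) = Tm n (\<lambda>k. - (y * ?bb k)) ?aa" by (rule Tm_sym) (use qa in simp_all)
    also have "\<dots> = Tm n (\<lambda>k. (- y) * ?bb k) ?aa" by simp
    also have "\<dots> = Tm n ?bb (\<lambda>k. (- y) * ?aa k)" by (rule Tm_scale)
    finally have eq: "Tm n ?aa (\<lambda>k. y * ?bb k) = Tm n ?bb (\<lambda>k. (- y) * ?aa k)" .
    have "Tm n ?bb (\<lambda>k. (- y) * ?aa k) \<in> F"
    proof (rule E6[OF q(1,2)])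
      show "sv n ?bb" "sv n (\<lambda>k. (- y) * ?aa k)" using sve by auto
      show "?bb 2 = 0" using evs by simp
      show "?bb (2*q+1) = 0" "?bb (2*q+2) = 0" "(- y) * ?aa (2*q+1) = 0" "(- y) * ?aa (2*q+2) = 0"
        using evs by auto
      show "Qf n ?bb = 0" "Qf n (\<lambda>k. (- y) * ?aa k) = 0" using qa by auto
      show "Bf n ?bb (\<lambda>k. (- y) * ?aa k) = 0" using Be B12 evs by (simp add: algebra_simps)
      show "\<And>k. (- y) * ?aa k \<in> I" using idl_mult2[OF idl idl_neg[OF idl yI]] by simp
    qed
    then show ?thesis using eq by simp
  qed
  have "?be * Tm n f v * ?be' \<in> F" unfolding split2 c1 c2 using F1 F2 Fm by simp
  then show ?thesis unfolding bt_def e_def f_def .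
qed

end

lemma sig_ne_self: "1 \<le> h \<Longrightarrow> sig h \<noteq> h" unfolding sig_def by auto
lemma ev_sig_self: "1 \<le> h \<Longrightarrow> ev h (sig h) = 0" using sig_ne_self by (simp add: ev_def)

lemma DL: fixes u v :: "nat \<Rightarrow> 'a::comm_ring_1"
  assumes s: "sv n u" "sv n v" and h: "1 \<le> h" "h \<le> 2*n" and z: "u (sig h) = 0" "v (sig h) = 0"
  and q: "Qf n u = 0" "Qf n v = 0" "Bf n u v = 0"
  shows "Tm n u v = Tm n (ev h) (\<lambda>k. - (v h * u k)) * (Tm n (ev h) (\<lambda>k. u h * (v k - v h * ev h k))
                     * Tm n (\<lambda>k. u k - u h * ev h k) (\<lambda>k. v k - v h * ev h k))"
proof -
  define v' where "v' = (\<lambda>k. v k - v h * ev h k)"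
  define u' where "u' = (\<lambda>k. u k - u h * ev h k)"
  have se: "sv n (ev h :: nat \<Rightarrow> 'a)" using h by auto
  have es: "ev h (sig h) = (0::'a)" using ev_sig_self h by simp
  have sv': "sv n v'" "sv n u'" unfolding v'_def u'_def using s se by auto
  have Bh: "Bf n (ev h) w = w (sig h)" "Bf n w (ev h) = w (sig h)" for w :: "nat \<Rightarrow> 'a" using h by auto
  have z': "v' (sig h) = 0" "u' (sig h) = 0" unfolding v'_def u'_def using z es by auto
  have qv': "Qf n v' = 0" unfolding v'_def using q z Bh by simp
  have qu': "Qf n u' = 0" unfolding u'_def using q z Bh by simp
  have Buv': "Bf n u v' = 0" unfolding v'_def using q z Bh by simp
  have Bu'v': "Bf n u' v' = 0" unfolding u'_def using Buv' z' Bh by simp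
  have e1: "Tm n u (\<lambda>k. v h * ev h k) * Tm n u v' = Tm n u (\<lambda>k. v h * ev h k + v' k)"
    by (rule Tm_add2) (use s sv' se q z Bh Buv' in auto)
  have ev1: "(\<lambda>k. v h * ev h k + v' k) = v" unfolding v'_def by auto
  have e2: "Tm n u (\<lambda>k. v h * ev h k) = Tm n (ev h) (\<lambda>k. - (v h * u k))"
  proof -
    have "Tm n u (\<lambda>k. v h * ev h k) = Tm n (\<lambda>k. - (v h * ev h k)) u" by (rule Tm_sym) (use q in simp_all)
    also have "\<dots> = Tm n (\<lambda>k. (- v h) * ev h k) u" by simp
    also have "\<dots> = Tm n (ev h) (\<lambda>k. (- v h) * u k)" by (rule Tm_scale)
    finally show ?thesis by simp
  qed
  have e3: "Tm n (\<lambda>k. u h * ev h k + u' k) v' = Tm n (\<lambda>k. u h * ev h k) v' * Tm n u' v' * Tm n (\<lambda>k. u h * ev h k) (\<lambda>k. Qf n v' * u' k)"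
    by (rule Tm_add1) (use s sv' se qu' Bh z' Bu'v' in auto)
  have eu: "(\<lambda>k. u h * ev h k + u' k) = u" unfolding u'_def by auto
  have e4: "Tm n (\<lambda>k. u h * ev h k) v' = Tm n (ev h) (\<lambda>k. u h * v' k)" by (rule Tm_scale)
  have "Tm n u v = Tm n u (\<lambda>k. v h * ev h k) * Tm n u v'" using e1 ev1 by simp
  also have "\<dots> = Tm n (ev h) (\<lambda>k. - (v h * u k)) * (Tm n (ev h) (\<lambda>k. u h * v' k) * Tm n u' v')"
    using e2 e3 eu e4 qv' by (simp add: massoc)
  finally show ?thesis unfolding v'_def u'_def .
qed

lemma reassoc3: "(A::'a::comm_ring_1 mat) \<in> carrier_mat (2*n) (2*n) \<Longrightarrow> B \<in> carrier_mat (2*n) (2*n) \<Longrightarrow> C \<in> carrier_mat (2*n) (2*n)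
 \<Longrightarrow> D \<in> carrier_mat (2*n) (2*n) \<Longrightarrow> E \<in> carrier_mat (2*n) (2*n) \<Longrightarrow> G \<in> carrier_mat (2*n) (2*n)
 \<Longrightarrow> A * B * C * (D * E) * G = A * (B * C * D) * E * G"
  by (simp add: massoc)

context EOset begin

lemma E7: fixes u v :: "nat \<Rightarrow> 'a"
  assumes p: "1 \<le> p" "p < n" and s: "sv n u" "sv n v"
  and z: "u (2*p+1) = 0" "u (2*p+2) = 0" "v (2*p+1) = 0" "v (2*p+2) = 0"
  and qq: "Qf n u = 0" "Qf n v = 0" "Bf n u v = 0" and vI: "\<And>k. v k \<in> I"
  shows "Tm n u v \<in> F"
proof -
  define e :: "nat \<Rightarrow> 'a" where "e = ev (2*p+1)"
  define f :: "nat \<Rightarrow> 'a" where "f = ev (2*p+2)"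
  define c where "c = u 2"
  define u' where "u' = (\<lambda>k. u k - c * ev 2 k)"
  have sve: "sv n e" "sv n f" "sv n (ev 2 :: nat \<Rightarrow> 'a)" using p n3 unfolding e_def f_def by auto
  have Be: "Bf n e w = w (2*p+2)" for w :: "nat \<Rightarrow> 'a"
    using p unfolding e_def by (auto simp: sig_odd)
  have evs: "ev 2 (2*p+2) = (0::'a)" "ev 2 2 = (1::'a)" using p by (auto simp: ev_def)
  have qe: "Qf n e = 0" unfolding e_def by simp
  have su': "sv n u'" unfolding u'_def using s sve by auto
  have Beu': "Bf n e u' = 0" "Bf n e (\<lambda>k. c * ev 2 k) = 0" unfolding u'_def using Be z evs by auto
  have eq: "Tm n u v = Tm n e u * Tm n f (\<lambda>k. - v k) * Tm n e (\<lambda>k. - u k) * Tm n f v"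
    unfolding e_def f_def by (rule COMM[OF p(2) s z qq])
  have s1: "Tm n e u = Tm n e u' * Tm n e (\<lambda>k. c * ev 2 k)"
  proof -
    have "Tm n e u' * Tm n e (\<lambda>k. c * ev 2 k) = Tm n e (\<lambda>k. u' k + c * ev 2 k)"
      by (rule Tm_add2) (use sve su' qe Beu' in auto)
    moreover have "(\<lambda>k. u' k + c * ev 2 k) = u" unfolding u'_def by auto
    ultimately show ?thesis by simp
  qed
  have s2: "Tm n e (\<lambda>k. - u k) = Tm n e (\<lambda>k. - (c * ev 2 k)) * Tm n e (\<lambda>k. - u' k)"
  proof -
    have "Tm n e (\<lambda>k. - (c * ev 2 k)) * Tm n e (\<lambda>k. - u' k) = Tm n e (\<lambda>k. - (c * ev 2 k) + - u' k)"
      by (rule Tm_add2) (use sve su' qe Beu' in auto)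
    moreover have "(\<lambda>k. - (c * ev 2 k) + - u' k) = (\<lambda>k. - u k)" unfolding u'_def by auto
    ultimately show ?thesis by simp
  qed
  have key: "Tm n e (\<lambda>k. c * ev 2 k) * Tm n f (\<lambda>k. - v k) * Tm n e (\<lambda>k. - (c * ev 2 k)) \<in> F"
    unfolding e_def f_def
    by (rule KEY[OF p]) (use s z vI idl_neg[OF idl] qq in auto)
  have nz: "Nzs (Tm n e u') (Tm n e (\<lambda>k. - u' k))"
    unfolding e_def by (rule NORM) (use p su' z sig_odd evs in \<open>auto simp: u'_def c_def\<close>)
  have hf: "Tm n f v \<in> F" unfolding f_def by (rule Eh) (use p s z sig_even vI in auto)
  have "Tm n u v = Tm n e u' * (Tm n e (\<lambda>k. c * ev 2 k) * Tm n f (\<lambda>k. - v k) * Tm n e (\<lambda>k. - (c * ev 2 k)))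
      * Tm n e (\<lambda>k. - u' k) * Tm n f v"
    unfolding eq s1 s2 by (rule reassoc3[of _ n]) auto
  then show ?thesis using Nzs_conj[OF nz key] hf Fm by simp
qed

lemma FP: fixes u v :: "nat \<Rightarrow> 'a"
  assumes p: "p < n" and s: "sv n u" "sv n v"
  and z: "u (2*p+1) = 0" "u (2*p+2) = 0" "v (2*p+1) = 0" "v (2*p+2) = 0"
  and qq: "Qf n u = 0" "Qf n v = 0" "Bf n u v = 0" and vI: "\<And>k. v k \<in> I"
  shows "Tm n u v \<in> F"
proof (cases "p = 0")
  case True then show ?thesis using E3[OF s] z qq vI by (simp add: numeral_2_eq_2)
next
  case False then show ?thesis using E7[OF _ p s z qq vI] by simp
qed

lemma pair_of: "1 \<le> h \<Longrightarrow> (h = 2*((h-1) div 2)+1 \<and> sig h = 2*((h-1) div 2)+2) \<or> (h = 2*((h-1) div 2)+2 \<and> sig h = 2*((h-1) div 2)+1)"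
  unfolding sig_def by auto

lemma L1: fixes u v :: "nat \<Rightarrow> 'a"
  assumes s: "sv n u" "sv n v" and h: "1 \<le> h" "h \<le> 2*n" and z: "u (sig h) = 0" "v (sig h) = 0"
  and q: "Qf n u = 0" "Qf n v = 0" "Bf n u v = 0" and vI: "\<And>k. v k \<in> I"
  shows "Tm n u v \<in> F"
proof -
  have es: "ev h (sig h) = (0::'a)" using ev_sig_self h by simp
  have se: "sv n (ev h :: nat \<Rightarrow> 'a)" using h by auto
  define p where "p = (h - 1) div 2"
  have pn: "p < n" using h unfolding p_def by auto
  have hp: "{h, sig h} = {2*p+1, 2*p+2}" using pair_of[OF h(1)] unfolding p_def by auto
  have a: "Tm n (ev h) (\<lambda>k. - (v h * u k)) \<in> F"
    by (rule Eh[OF h]) (use s z vI idl_neg[OF idl] idl_mult2[OF idl] in auto)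
  have vI': "\<And>k. v k - v h * ev h k \<in> I" using vI idl_diff[OF idl] idl_mult2[OF idl] by auto
  have b: "Tm n (ev h) (\<lambda>k. u h * (v k - v h * ev h k)) \<in> F"
    by (rule Eh[OF h]) (use s se z es vI' idl_mult[OF idl] in auto)
  let ?u' = "\<lambda>k. u k - u h * ev h k" and ?v' = "\<lambda>k. v k - v h * ev h k"
  have zz: "?u' h = 0" "?u' (sig h) = 0" "?v' h = 0" "?v' (sig h) = 0" using z es by auto
  have zp: "?u' (2*p+1) = 0" "?u' (2*p+2) = 0" "?v' (2*p+1) = 0" "?v' (2*p+2) = 0"
    using zz hp by (metis doubleton_eq_iff)+
  have Bh: "Bf n (ev h) w = w (sig h)" "Bf n w (ev h) = w (sig h)" for w :: "nat \<Rightarrow> 'a" using h by auto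
  have c: "Tm n ?u' ?v' \<in> F"
  proof (rule FP[OF pn _ _ zp])
    show "sv n ?u'" "sv n ?v'" using s se by auto
    show "Qf n ?u' = 0" "Qf n ?v' = 0" using q z Bh by auto
    show "Bf n ?u' ?v' = 0" using q z Bh es by (simp add: algebra_simps)
    show "\<And>k. ?v' k \<in> I" using vI' .
  qed
  show ?thesis unfolding DL[OF s h z q] using a b c Fm by simp
qed

end

lemma avoid4: fixes m a b c d :: nat assumes "5 \<le> m" shows "\<exists>h. 1 \<le> h \<and> h \<le> m \<and> h \<noteq> a \<and> h \<noteq> b \<and> h \<noteq> c \<and> h \<noteq> d"
proof (rule ccontr)
  assume "\<not> ?thesis"
  then have "{1..5::nat} \<subseteq> {a,b,c,d}" using assms by (auto simp: subset_iff)
  then have "card {1..5::nat} \<le> card {a,b,c,d}" by (intro card_mono) auto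
  also have "\<dots> \<le> 4" using card_length[of "[a,b,c,d]"] by simp
  finally show False by simp
qed

lemma DEC2: assumes G1: "1\<^sub>m (2*n) \<in> G" and Gm: "\<And>a b. a \<in> G \<Longrightarrow> b \<in> G \<Longrightarrow> a * b \<in> G"
  and h: "1 \<le> h" "h \<le> 2*n" and w: "sv n w" "w (sig h) = 0"
  and f: "\<And>m. 1 \<le> m \<Longrightarrow> m \<le> 2*n \<Longrightarrow> Tm n (ev h) (\<lambda>k. w m * ev m k) \<in> G"
  shows "Tm n (ev h) w \<in> G"
proof -
  have "j \<le> 2*n \<Longrightarrow> Tm n (ev h) (\<lambda>k. if k \<le> j then w k else 0) \<in> G" for j
  proof (induction j)
    case 0
    have "(\<lambda>k. if k \<le> 0 then w k else 0) = (\<lambda>k. 0)" using w(1) unfolding sv_def by auto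
    then show ?case using G1 by simp
  next
    case (Suc j)
    let ?wj = "\<lambda>k. if k \<le> j then w k else 0"
    have eq: "(\<lambda>k. if k \<le> Suc j then w k else 0) = (\<lambda>k. ?wj k + w (Suc j) * ev (Suc j) k)"
      by (auto simp: fun_eq_iff ev_def le_Suc_eq)
    have svj: "sv n ?wj" using w(1) unfolding sv_def by auto
    have sve: "sv n (\<lambda>k. w (Suc j) * ev (Suc j) k)" using Suc.prems by (intro sv_sc sv_ev) auto
    have b1: "Bf n (ev h) ?wj = 0" using h w by simp
    have z: "w (Suc j) * ev (Suc j) (sig h) = 0" using w(2) by (cases "sig h = Suc j") (auto simp: ev_def)
    have b2: "Bf n (ev h) (\<lambda>k. w (Suc j) * ev (Suc j) k) = 0" using h z by simp
    have "Tm n (ev h) (\<lambda>k. if k \<le> Suc j then w k else 0) = Tm n (ev h) ?wj * Tm n (ev h) (\<lambda>k. w (Suc j) * ev (Suc j) k)"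
      unfolding eq by (rule Tm_add2[symmetric]) (use h svj sve b1 b2 in auto)
    then show ?case using Gm Suc f by auto
  qed
  from this[of "2*n"] have "Tm n (ev h) (\<lambda>k. if k \<le> 2*n then w k else 0) \<in> G" by simp
  moreover have "(\<lambda>k. if k \<le> 2*n then w k else 0) = w" using w(1) unfolding sv_def by auto
  ultimately show ?thesis by simp
qed

context EOset begin

definition Gp :: "(nat \<Rightarrow> 'a) \<Rightarrow> (nat \<Rightarrow> 'a) \<Rightarrow> bool" where
  "Gp u v \<longleftrightarrow> sv n u \<and> sv n v \<and> Qf n u = 0 \<and> Qf n v = 0 \<and> Bf n u v = 0 \<and> (\<forall>k. v k \<in> I)
     \<and> (\<exists>h. 1 \<le> h \<and> h \<le> 2*n \<and> u (sig h) = 0 \<and> v (sig h) = 0)"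

definition Ys :: "'a mat set" where "Ys = {Tm n u v | u v. Gp u v}"
abbreviation H where "H \<equiv> gen_subgroup n Ys"

lemma Ysc: "Ys \<subseteq> carrier_mat (2*n) (2*n)" unfolding Ys_def by auto
lemma Hm: "a \<in> H \<Longrightarrow> b \<in> H \<Longrightarrow> a * b \<in> H" using gs_mult[OF Ysc] by auto
lemma Hc: "a \<in> H \<Longrightarrow> a \<in> carrier_mat (2*n) (2*n)" using gs_carrier[OF Ysc] by auto
lemma H1: "1\<^sub>m (2*n) \<in> H" by (rule gs_one)
lemma YsH: "s \<in> Ys \<Longrightarrow> s \<in> H" using gs_gen[OF Ysc] by auto

lemma Ys_F: "s \<in> Ys \<Longrightarrow> s \<in> F"
  unfolding Ys_def Gp_def using L1 by blast

lemma Ys_inv_ex: "s \<in> Ys \<Longrightarrow> \<exists>s'. s' \<in> Ys \<and> s * s' = 1\<^sub>m (2*n) \<and> s' * s = 1\<^sub>m (2*n)"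
proof -
  assume "s \<in> Ys"
  then obtain u v where s: "s = Tm n u v" and g: "Gp u v" unfolding Ys_def by auto
  have g': "Gp u (\<lambda>k. - v k)" using g idl_neg[OF idl] unfolding Gp_def by auto
  show ?thesis using g g' Tm_inv[of n u v] unfolding s Ys_def Gp_def by blast
qed

lemma Ys_inv: assumes "s \<in> Ys" "t \<in> carrier_mat (2*n) (2*n)" "s * t = 1\<^sub>m (2*n)" "t * s = 1\<^sub>m (2*n)"
  shows "t \<in> Ys"
proof -
  obtain s' where s': "s' \<in> Ys" "s * s' = 1\<^sub>m (2*n)" using Ys_inv_ex[OF assms(1)] by auto
  have "t = s'" by (rule inv_unique[of s "2*n"]) (use assms s' Ysc in auto)
  then show ?thesis using s' by simp
qed

lemma H_F: "x \<in> H \<Longrightarrow> x \<in> F"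
proof (induction rule: gen_subgroup.induct)
  case one then show ?case by (rule F1)
next
  case (gen a s) then show ?case using Ys_F Fm by auto
next
  case (inv a s t) then show ?case using Ys_inv Ys_F Fm by blast
qed

lemma L2a: fixes u v :: "nat \<Rightarrow> 'a"
  assumes oi: "oe_index n k l" and g: "Gp u v" and h: "1 \<le> h" "h \<le> 2*n" "u (sig h) = 0" "v (sig h) = 0"
  and hb: "h \<noteq> l" "h \<noteq> sig k"
  shows "oe n k l c * Tm n u v * oe n k l (- c) \<in> Ys"
proof -
  have r: "1 \<le> k" "k \<le> 2*n" "1 \<le> l" "l \<le> 2*n" "k \<noteq> l" "k \<noteq> sig l" using oi unfolding oe_index_def by auto
  have sl: "1 \<le> sig l" "sig l \<le> 2*n" using sig_range r by auto
  let ?b = "\<lambda>m. c * ev (sig l) m"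
  have sv: "sv n u" "sv n v" using g unfolding Gp_def by auto
  have se: "sv n (ev k :: nat \<Rightarrow> 'a)" "sv n ?b" using r sl by auto
  have hh: "sig h \<noteq> k" "sig h \<noteq> sig l" "sig k \<noteq> sig l" using hb r by (metis sig_sig)+
  have ee: "ev (sig l) (sig k) = (0::'a)" "ev k (sig h) = (0::'a)" "ev (sig l) (sig h) = (0::'a)"
    using hh unfolding ev_def by auto
  have qa: "Qf n (ev k) = 0" "Bf n (ev k) ?b = 0" using r ee by auto
  have Bk: "Bf n (ev k) w = w (sig k)" for w :: "nat \<Rightarrow> 'a" using r by auto
  have Bb: "Bf n ?b w = c * w l" for w :: "nat \<Rightarrow> 'a" using sl by simp
  have vI: "\<And>m. v m \<in> I" using g unfolding Gp_def by auto
  have "Gp (Tv n (ev k) ?b u) (Tv n (ev k) ?b v)"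
    unfolding Gp_def
  proof (intro conjI)
    show "sv n (Tv n (ev k) ?b u)" "sv n (Tv n (ev k) ?b v)" using sv se by auto
    show "Qf n (Tv n (ev k) ?b u) = 0" "Qf n (Tv n (ev k) ?b v) = 0"
      using Tv_Q[OF qa] g unfolding Gp_def by auto
    show "Bf n (Tv n (ev k) ?b u) (Tv n (ev k) ?b v) = 0" using Tv_B[OF qa] g unfolding Gp_def by auto
    show "\<forall>m. Tv n (ev k) ?b v m \<in> I"
      unfolding Tv_def Bk Bb using vI qa idl_add[OF idl] idl_diff[OF idl] idl_mult[OF idl] idl_mult2[OF idl]
      by (auto simp: Bk)
    show "\<exists>h. 1 \<le> h \<and> h \<le> 2*n \<and> Tv n (ev k) ?b u (sig h) = 0 \<and> Tv n (ev k) ?b v (sig h) = 0"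
      using h ee by (intro exI[of _ h]) (simp add: Tv_def)
  qed
  then show ?thesis unfolding conj_oe[OF oi sv] Ys_def by blast
qed

end

lemma conj_mult: assumes "(t::'a::comm_ring_1 mat) \<in> carrier_mat (2*n) (2*n)" "t' \<in> carrier_mat (2*n) (2*n)"
  "A \<in> carrier_mat (2*n) (2*n)" "B \<in> carrier_mat (2*n) (2*n)" "t' * t = 1\<^sub>m (2*n)"
  shows "t * (A * B) * t' = (t * A * t') * (t * B * t')"
proof -
  have "(t * A * t') * (t * B * t') = t * A * (t' * t) * B * t'" by (rule reassoc1[of _ n]) (use assms in auto)
  also have "\<dots> = t * A * B * t'" using assms by simp
  also have "\<dots> = t * (A * B) * t'" using assms by (simp add: massoc)
  finally show ?thesis by simp
qed

context EOset begin

lemma conjA: fixes w :: "nat \<Rightarrow> 'a"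
  assumes oi: "oe_index n k l" and h: "1 \<le> h" "h \<le> 2*n" and w: "sv n w" "w (sig h) = 0" "\<And>k. w k \<in> I"
  shows "oe n k l c * Tm n (ev h) w * oe n k l (- c) \<in> H"
proof -
  let ?t = "oe n k l c" and ?t' = "oe n k l (- c)"
  have i: "?t * ?t' = 1\<^sub>m (2*n)" "?t' * ?t = 1\<^sub>m (2*n)" using oe_inv[OF oi] by auto
  let ?G = "{A. A \<in> carrier_mat (2*n) (2*n) \<and> ?t * A * ?t' \<in> H}"
  have "Tm n (ev h) w \<in> ?G"
  proof (rule DEC2[OF _ _ h w(1,2)])
    show "1\<^sub>m (2*n) \<in> ?G" using i H1 by simp
    show "a * b \<in> ?G" if "a \<in> ?G" "b \<in> ?G" for a b
      using that conj_mult[of ?t n ?t' a b] i Hm by auto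
    fix m assume m: "1 \<le> m" "m \<le> 2*n"
    have "5 \<le> 2*n" using n3 by simp
    then obtain h' where h': "1 \<le> h'" "h' \<le> 2*n" "h' \<noteq> l" "h' \<noteq> sig k" "h' \<noteq> sig h" "h' \<noteq> sig m"
      using avoid4[of "2*n" l "sig k" "sig h" "sig m"] by blast
    have hh: "sig h' \<noteq> h" "sig h' \<noteq> m" using h' by (metis sig_sig)+
    have z: "w m * ev m (sig h) = 0" using w(2) by (cases "sig h = m") (auto simp: ev_def)
    have z2: "w m * ev h (sig m) = 0" using w(2) by (cases "m = sig h") (auto simp: ev_def)
    have e1: "ev h (sig h') = (0::'a)" "w m * ev m (sig h') = 0" using hh by (auto simp: ev_def)
    have ex: "\<exists>x. 1 \<le> x \<and> x \<le> 2*n \<and> ev h (sig x) = (0::'a) \<and> w m * ev m (sig x) = 0" using h' e1 by blast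
    have g: "Gp (ev h) (\<lambda>k. w m * ev m k)" unfolding Gp_def
      using h m z z2 w(3) idl_mult2[OF idl] ex by auto
    have "?t * Tm n (ev h) (\<lambda>k. w m * ev m k) * ?t' \<in> Ys"
      by (rule L2a[OF oi g _ _ _ _ h'(3,4)]) (use h' e1 in auto)
    then show "Tm n (ev h) (\<lambda>k. w m * ev m k) \<in> ?G" using YsH by auto
  qed
  then show ?thesis by simp
qed

end

lemma RA1: "(A::'a::comm_ring_1 mat) \<in> carrier_mat (2*n) (2*n) \<Longrightarrow> B \<in> carrier_mat (2*n) (2*n) \<Longrightarrow> C \<in> carrier_mat (2*n) (2*n)
 \<Longrightarrow> D \<in> carrier_mat (2*n) (2*n) \<Longrightarrow> A * B * (C * D) = A * (B * C) * D"
  by (simp add: massoc)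
lemma RA2: "(A::'a::comm_ring_1 mat) \<in> carrier_mat (2*n) (2*n) \<Longrightarrow> B \<in> carrier_mat (2*n) (2*n) \<Longrightarrow> C \<in> carrier_mat (2*n) (2*n)
 \<Longrightarrow> D \<in> carrier_mat (2*n) (2*n) \<Longrightarrow> E \<in> carrier_mat (2*n) (2*n) \<Longrightarrow> A * B * C * (D * E) = A * (B * C * D) * E"
  by (simp add: massoc)

context EOset begin

lemma L2: fixes u v :: "nat \<Rightarrow> 'a"
  assumes oi: "oe_index n k l" and g: "Gp u v"
  shows "oe n k l c * Tm n u v * oe n k l (- c) \<in> H"
proof -
  obtain h where h: "1 \<le> h" "h \<le> 2*n" "u (sig h) = 0" "v (sig h) = 0" using g unfolding Gp_def by auto
  have r: "1 \<le> k" "k \<le> 2*n" "1 \<le> l" "l \<le> 2*n" "k \<noteq> l" "k \<noteq> sig l" using oi unfolding oe_index_def by auto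
  show ?thesis
  proof (cases "h \<noteq> l \<and> h \<noteq> sig k")
    case True then show ?thesis using L2a[OF oi g h] YsH by auto
  next
    case False
    have sv: "sv n u" "sv n v" and q: "Qf n u = 0" "Qf n v = 0" "Bf n u v = 0" and vI: "\<And>m. v m \<in> I"
      using g unfolding Gp_def by auto
    let ?t = "oe n k l c" and ?t' = "oe n k l (- c)"
    have i: "?t' * ?t = 1\<^sub>m (2*n)" using oe_inv[OF oi] by auto
    let ?A1 = "Tm n (ev h) (\<lambda>k. - (v h * u k))"
    let ?A2 = "Tm n (ev h) (\<lambda>k. u h * (v k - v h * ev h k))"
    let ?u' = "\<lambda>k. u k - u h * ev h k" and ?v' = "\<lambda>k. v k - v h * ev h k"
    let ?Z = "Tm n ?u' ?v'"
    have dl: "Tm n u v = ?A1 * (?A2 * ?Z)" by (rule DL[OF sv h(1,2,3,4) q])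
    have es: "ev h (sig h) = (0::'a)" using ev_sig_self h by simp
    have se: "sv n (ev h :: nat \<Rightarrow> 'a)" using h by auto
    have vI': "\<And>m. ?v' m \<in> I" using vI idl_diff[OF idl] idl_mult2[OF idl] by auto
    have a1: "?t * ?A1 * ?t' \<in> H"
      by (rule conjA[OF oi h(1,2)]) (use sv h vI idl_neg[OF idl] idl_mult2[OF idl] in auto)
    have a2: "?t * ?A2 * ?t' \<in> H"
      by (rule conjA[OF oi h(1,2)]) (use sv se h es vI' idl_mult[OF idl] in auto)
    have Bh: "Bf n (ev h) w = w (sig h)" "Bf n w (ev h) = w (sig h)" for w :: "nat \<Rightarrow> 'a" using h by auto
    have sh: "1 \<le> sig h" "sig h \<le> 2*n" using sig_range h by auto
    have gz: "Gp ?u' ?v'" unfolding Gp_def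
    proof (intro conjI)
      show "sv n ?u'" "sv n ?v'" using sv se by auto
      show "Qf n ?u' = 0" "Qf n ?v' = 0" using q h Bh by auto
      show "Bf n ?u' ?v' = 0" using q h Bh es by (simp add: algebra_simps)
      show "\<forall>m. ?v' m \<in> I" using vI' by auto
      show "\<exists>x. 1 \<le> x \<and> x \<le> 2 * n \<and> ?u' (sig x) = 0 \<and> ?v' (sig x) = 0"
        using sh by (intro exI[of _ "sig h"]) simp
    qed
    have hb: "sig h \<noteq> l" "sig h \<noteq> sig k" using False r sig_ne_self by (metis sig_sig)+
    have a3: "?t * ?Z * ?t' \<in> H"
      using L2a[OF oi gz sh _ _ hb] YsH by simp
    have c: "?t \<in> carrier_mat (2*n) (2*n)" "?t' \<in> carrier_mat (2*n) (2*n)" by auto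
    have "?t * Tm n u v * ?t' = (?t * ?A1 * ?t') * ((?t * ?A2 * ?t') * (?t * ?Z * ?t'))"
      unfolding dl using conj_mult[OF c _ _ i] by simp
    then show ?thesis using a1 a2 a3 Hm by simp
  qed
qed

lemma conjH: assumes oi: "oe_index n k l" and y: "y \<in> H"
  shows "oe n k l c * y * oe n k l (- c) \<in> H"
  using y
proof (induction rule: gen_subgroup.induct)
  case one
  have "oe n k l c * oe n k l (- c) = 1\<^sub>m (2*n)" by (rule oe_inv(1)[OF oi])
  then show ?case using H1 by simp
next
  case (gen a s)
  obtain u v where s: "s = Tm n u v" "Gp u v" using gen.hyps(2) unfolding Ys_def by auto
  have i: "oe n k l (- c) * oe n k l c = 1\<^sub>m (2*n)" using oe_inv[OF oi] by auto
  have "oe n k l c * (a * s) * oe n k l (- c) = (oe n k l c * a * oe n k l (- c)) * (oe n k l c * s * oe n k l (- c))"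
    by (rule conj_mult) (use i Hc gen.hyps(1) s in auto)
  then show ?case using gen.IH L2[OF oi s(2)] s(1) Hm by simp
next
  case (inv a s t)
  have "t \<in> Ys" using Ys_inv inv.hyps by auto
  then obtain u v where s: "t = Tm n u v" "Gp u v" unfolding Ys_def by auto
  have i: "oe n k l (- c) * oe n k l c = 1\<^sub>m (2*n)" using oe_inv[OF oi] by auto
  have "oe n k l c * (a * t) * oe n k l (- c) = (oe n k l c * a * oe n k l (- c)) * (oe n k l c * t * oe n k l (- c))"
    by (rule conj_mult) (use i Hc inv.hyps(1) s in auto)
  then show ?case using inv.IH L2[OF oi s(2)] s(1) Hm by simp
qed

definition S0 :: "'a mat set" where "S0 = {oe n i j z | i j z. oe_index n i j}"

lemma EO_eq: "EO n = gen_subgroup n S0" unfolding EO_def S0_def ..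
lemma S0c: "S0 \<subseteq> carrier_mat (2*n) (2*n)" unfolding S0_def by auto

lemma K_step: assumes P: "a' \<in> carrier_mat (2*n) (2*n) \<and> a * a' = 1\<^sub>m (2*n) \<and> a' * a = 1\<^sub>m (2*n) \<and> (\<forall>y\<in>H. a * y * a' \<in> H)"
  and ac: "a \<in> carrier_mat (2*n) (2*n)" and oi: "oe_index n i j"
  shows "\<exists>g'. g' \<in> carrier_mat (2*n) (2*n) \<and> (a * oe n i j z) * g' = 1\<^sub>m (2*n) \<and> g' * (a * oe n i j z) = 1\<^sub>m (2*n)
     \<and> (\<forall>y\<in>H. (a * oe n i j z) * y * g' \<in> H)"
proof (intro exI[of _ "oe n i j (- z) * a'"] conjI ballI)
  let ?s = "oe n i j z" and ?s' = "oe n i j (- z)"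
  have c: "?s \<in> carrier_mat (2*n) (2*n)" "?s' \<in> carrier_mat (2*n) (2*n)" "a' \<in> carrier_mat (2*n) (2*n)" using P by auto
  have i: "?s * ?s' = 1\<^sub>m (2*n)" "?s' * ?s = 1\<^sub>m (2*n)" using oe_inv[OF oi] by auto
  show "?s' * a' \<in> carrier_mat (2*n) (2*n)" using c by auto
  have "a * ?s * (?s' * a') = a * (?s * ?s') * a'" by (rule RA1[of _ n]) (use c ac in auto)
  then show "a * ?s * (?s' * a') = 1\<^sub>m (2*n)" using i P c ac by simp
  have "?s' * a' * (a * ?s) = ?s' * (a' * a) * ?s" by (rule RA1[of _ n]) (use c ac in auto)
  then show "?s' * a' * (a * ?s) = 1\<^sub>m (2*n)" using i P c ac by simp
  fix y assume y: "y \<in> H"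
  have yc: "y \<in> carrier_mat (2*n) (2*n)" using Hc y by auto
  have "a * ?s * y * (?s' * a') = a * (?s * y * ?s') * a'" by (rule RA2[of _ n]) (use c ac yc in auto)
  then show "a * ?s * y * (?s' * a') \<in> H" using P conjH[OF oi y] by simp
qed

lemma K: "g \<in> EO n \<Longrightarrow> \<exists>g'. g' \<in> carrier_mat (2*n) (2*n) \<and> g * g' = 1\<^sub>m (2*n) \<and> g' * g = 1\<^sub>m (2*n) \<and> (\<forall>y\<in>H. g * y * g' \<in> H)"
  unfolding EO_eq
proof (induction rule: gen_subgroup.induct)
  case one
  show ?case by (intro exI[of _ "1\<^sub>m (2*n)"]) (auto simp: Hc)
next
  case (gen a s)
  obtain i j z where s: "s = oe n i j z" "oe_index n i j" using gen.hyps(2) unfolding S0_def by auto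
  obtain a' where a': "a' \<in> carrier_mat (2*n) (2*n) \<and> a * a' = 1\<^sub>m (2*n) \<and> a' * a = 1\<^sub>m (2*n) \<and> (\<forall>y\<in>H. a * y * a' \<in> H)"
    using gen.IH by blast
  show ?case unfolding s(1) by (rule K_step[OF a' gs_carrier[OF S0c gen.hyps(1)] s(2)])
next
  case (inv a s t)
  obtain i j z where s: "s = oe n i j z" "oe_index n i j" using inv.hyps(2) unfolding S0_def by auto
  have "t = oe n i j (- z)"
    by (rule inv_unique[of s "2*n"]) (use inv.hyps s oe_inv[OF s(2)] in auto)
  obtain a' where a': "a' \<in> carrier_mat (2*n) (2*n) \<and> a * a' = 1\<^sub>m (2*n) \<and> a' * a = 1\<^sub>m (2*n) \<and> (\<forall>y\<in>H. a * y * a' \<in> H)"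
    using inv.IH by blast
  show ?case unfolding \<open>t = oe n i j (- z)\<close> by (rule K_step[OF a' gs_carrier[OF S0c inv.hyps(1)] s(2)])
qed

lemma X_Ys: assumes oi: "oe_index n i j" and x: "x \<in> I" shows "oe n i j x \<in> Ys"
proof -
  have r: "1 \<le> i" "i \<le> 2*n" "1 \<le> j" "j \<le> 2*n" "i \<noteq> j" "i \<noteq> sig j" using oi unfolding oe_index_def by auto
  have sj: "1 \<le> sig j" "sig j \<le> 2*n" using sig_range r by auto
  have "5 \<le> 2*n" using n3 by simp
  then obtain h' where h': "1 \<le> h'" "h' \<le> 2*n" "h' \<noteq> sig i" "h' \<noteq> j"
    using avoid4[of "2*n" "sig i" j j j] by blast
  have hh: "sig h' \<noteq> i" "sig h' \<noteq> sig j" using h' by (metis sig_sig)+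
  have e1: "ev i (sig h') = (0::'a)" "x * ev (sig j) (sig h') = 0" "x * ev (sig j) (sig i) = 0" "x * ev i j = 0"
    using hh r by (auto simp: ev_def)
  have ex: "\<exists>y. 1 \<le> y \<and> y \<le> 2*n \<and> ev i (sig y) = (0::'a) \<and> x * ev (sig j) (sig y) = 0" using h' e1 by blast
  have "Gp (ev i) (\<lambda>k. x * ev (sig j) k)" unfolding Gp_def
    using r sj e1 ex x idl_mult2[OF idl] by auto
  then show ?thesis unfolding oe_T Ys_def by blast
qed

lemma EOI_H: "y \<in> EO_I n I \<Longrightarrow> y \<in> H"
  unfolding EO_I_def
proof (induction rule: gen_subgroup.induct)
  case one then show ?case by (rule H1)
next
  case (gen a s)
  then show ?case using X_Ys YsH Hm by blast
next
  case (inv a s t)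
  obtain i j x where s: "s = oe n i j x" "oe_index n i j" "x \<in> I" using inv.hyps(2) by auto
  have "t = oe n i j (- x)"
    by (rule inv_unique[of s "2*n"]) (use inv.hyps s oe_inv[OF s(2)] in auto)
  then show ?case using inv.IH X_Ys[OF s(2) idl_neg[OF idl s(3)]] YsH Hm by simp
qed

lemma H_inv: "y \<in> H \<Longrightarrow> \<exists>y'. y' \<in> H \<and> y * y' = 1\<^sub>m (2*n) \<and> y' * y = 1\<^sub>m (2*n)"
proof (induction rule: gen_subgroup.induct)
  case one then show ?case using H1 by auto
next
  case (gen a s)
  obtain a' where a': "a' \<in> H" "a * a' = 1\<^sub>m (2*n)" "a' * a = 1\<^sub>m (2*n)" using gen.IH by auto
  obtain s' where s': "s' \<in> Ys" "s * s' = 1\<^sub>m (2*n)" "s' * s = 1\<^sub>m (2*n)" using Ys_inv_ex[OF gen.hyps(2)] by auto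
  have c: "a \<in> carrier_mat (2*n) (2*n)" "a' \<in> carrier_mat (2*n) (2*n)" "s \<in> carrier_mat (2*n) (2*n)" "s' \<in> carrier_mat (2*n) (2*n)"
    using Hc gen.hyps a' s' Ysc by auto
  have "a * s * (s' * a') = a * (s * s') * a'" "s' * a' * (a * s) = s' * (a' * a) * s" using c by (simp_all add: massoc)
  then show ?case using a' s' c YsH Hm by (intro exI[of _ "s' * a'"]) auto
next
  case (inv a s t)
  have tY: "t \<in> Ys" using Ys_inv inv.hyps by auto
  obtain a' where a': "a' \<in> H" "a * a' = 1\<^sub>m (2*n)" "a' * a = 1\<^sub>m (2*n)" using inv.IH by auto
  have c: "a \<in> carrier_mat (2*n) (2*n)" "a' \<in> carrier_mat (2*n) (2*n)" "s \<in> carrier_mat (2*n) (2*n)" "t \<in> carrier_mat (2*n) (2*n)"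
    using Hc inv.hyps a' Ysc by auto
  have "a * t * (s * a') = a * (t * s) * a'" "s * a' * (a * t) = s * (a' * a) * t" using c by (simp_all add: massoc)
  then show ?case using a' inv.hyps c YsH Hm by (intro exI[of _ "s * a'"]) auto
qed

lemma main: "EO_rel n I \<subseteq> EO1_rel n I"
proof
  fix x assume "x \<in> EO_rel n I"
  then have "x \<in> H" unfolding EO_rel_def
  proof (induction rule: gen_subgroup.induct)
    case one then show ?case by (rule H1)
  next
    case (gen a s)
    then obtain g h g' where s: "s = g * h * g'" "g \<in> EO n" "h \<in> EO_I n I" "g' \<in> carrier_mat (2*n) (2*n)"
      "g * g' = 1\<^sub>m (2*n)" "g' * g = 1\<^sub>m (2*n)" by blast
    obtain g'' where g'': "g'' \<in> carrier_mat (2*n) (2*n)" "g * g'' = 1\<^sub>m (2*n)" "g'' * g = 1\<^sub>m (2*n)" "\<forall>y\<in>H. g * y * g'' \<in> H"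
      using K[OF s(2)] by blast
    have gc: "g \<in> carrier_mat (2*n) (2*n)" using gs_carrier[OF S0c] s(2) unfolding EO_eq by auto
    have "g' = g''" by (rule inv_unique[OF gc s(4) g''(1) s(6) g''(2)])
    then have "s \<in> H" using s g'' EOI_H by auto
    then show ?case using gen.IH Hm by auto
  next
    case (inv a s t)
    then obtain g h g' where s: "s = g * h * g'" "g \<in> EO n" "h \<in> EO_I n I" "g' \<in> carrier_mat (2*n) (2*n)"
      "g * g' = 1\<^sub>m (2*n)" "g' * g = 1\<^sub>m (2*n)" by blast
    obtain g'' where g'': "g'' \<in> carrier_mat (2*n) (2*n)" "g * g'' = 1\<^sub>m (2*n)" "g'' * g = 1\<^sub>m (2*n)" "\<forall>y\<in>H. g * y * g'' \<in> H"
      using K[OF s(2)] by blast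
    have gc: "g \<in> carrier_mat (2*n) (2*n)" using gs_carrier[OF S0c] s(2) unfolding EO_eq by auto
    have "g' = g''" by (rule inv_unique[OF gc s(4) g''(1) s(6) g''(2)])
    then have sH: "s \<in> H" using s g'' EOI_H by auto
    obtain s' where s': "s' \<in> H" "s * s' = 1\<^sub>m (2*n)" "s' * s = 1\<^sub>m (2*n)" using H_inv[OF sH] by auto
    have "t = s'" by (rule inv_unique[of s "2*n"]) (use inv.hyps s' Hc sH in auto)
    then show ?case using inv.IH s' Hm by auto
  qed
  then show "x \<in> EO1_rel n I" using H_F F_eq by simp
qed

end

theorem mainTheorem3:
  fixes I :: "'a::comm_ring_1 set" and n :: nat
  assumes "is_ideal I" and "n \<ge> 3"
  shows "EO_rel n I \<subseteq> EO1_rel n I"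
proof -
  interpret EOset n I using assms by unfold_locales auto
  show ?thesis by (rule main)
qed

end
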